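(* Let $\phi:[0,1]\to[0,1]$ be a nondecreasing continuous function such that $\phi(x)>x$ for all $x\in(0,1)$, $\phi(0)>0$ and $\phi(1-\varepsilon)=1$ for some $0<\varepsilon<1$. Let $N=N(\phi)\in\{2,3,\dots\}$ be the unique integer such that $\phi^N(x)=1$ for all $x\in[0,1]$ and $\phi^{N-1}(x_0)\neq 1$ for some $x_0\in[0,1)$. Let $V_\phi$ be the operator on $L_2[0,1]$ given by $(V_\phi f)(x)=\int_0^{\phi(x)}f(t)\,dt$. Then (1) $\sigma_p(V_\phi)\setminus\{0\}$ is finite; more precisely $\sigma_p(V_\phi)=\{0\}\cup\{\lambda_1,\dots,\lambda_N\}$ with $\lambda_n\neq0$; (2) $\sum_{n=1}^N\lambda_n=1$.
   Context: $\phi^k$ denotes the $k$-fold composition of $\phi$. $\sigma_p$ denotes the point spectrum; the nonzero eigenvalues $\lambda_1,\dots,\lambda_N$ are listed repeated according to their algebraic multiplicities. *)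

theory Defs
  imports "HOL-Analysis.Analysis"
begin

text \<open>Elements of L_2[0,1] (complex scalars) are represented by functions
  real => complex; two functions represent the same element iff they agree
  almost everywhere on [0,1].\<close>

definition L2_01 :: "(real \<Rightarrow> complex) set" where
  "L2_01 = {f. set_borel_measurable lborel {0..1} f \<and>
               set_integrable lborel {0..1} (\<lambda>x. (cmod (f x))^2)}"

definition ae01_zero :: "(real \<Rightarrow> complex) \<Rightarrow> bool" where
  "ae01_zero f \<longleftrightarrow> (AE x in lborel. x \<in> {0..1} \<longrightarrow> f x = 0)"

definition Vop :: "(real \<Rightarrow> real) \<Rightarrow> (real \<Rightarrow> complex) \<Rightarrow> real \<Rightarrow> complex" where
  "Vop \<phi> f x = (LINT t:{0..\<phi> x}|lborel. f t)"

definition point_spectrum :: "(real \<Rightarrow> real) \<Rightarrow> complex set" where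
  "point_spectrum \<phi> = {l. \<exists>f\<in>L2_01. \<not> ae01_zero f \<and>
                                 ae01_zero (\<lambda>x. Vop \<phi> f x - l * f x)}"

definition gen_eigenspace :: "(real \<Rightarrow> real) \<Rightarrow> complex \<Rightarrow> (real \<Rightarrow> complex) set" where
  "gen_eigenspace \<phi> l = {f\<in>L2_01. \<exists>k::nat.
       ae01_zero (((\<lambda>g x. Vop \<phi> g x - l * g x) ^^ k) f)}"

definition ae01_lin_indep :: "(real \<Rightarrow> complex) list \<Rightarrow> bool" where
  "ae01_lin_indep fs \<longleftrightarrow> (\<forall>c::nat \<Rightarrow> complex.
      ae01_zero (\<lambda>x. \<Sum>i<length fs. c i * (fs ! i) x) \<longrightarrow> (\<forall>i<length fs. c i = 0))"

definition has_alg_mult :: "(real \<Rightarrow> real) \<Rightarrow> complex \<Rightarrow> nat \<Rightarrow> bool" where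
  "has_alg_mult \<phi> l m \<longleftrightarrow>
     (\<exists>fs. length fs = m \<and> set fs \<subseteq> gen_eigenspace \<phi> l \<and> ae01_lin_indep fs) \<and>
     (\<forall>fs. set fs \<subseteq> gen_eigenspace \<phi> l \<and> ae01_lin_indep fs \<longrightarrow> length fs \<le> m)"

end

theory Submission
  imports Defs "Jordan_Normal_Form.Jordan_Normal_Form_Uniqueness" "Jordan_Normal_Form.Jordan_Normal_Form_Existence"
begin

locale vset =
  fixes \<phi> :: "real \<Rightarrow> real" and \<epsilon> :: real and N :: nat
  assumes mono: "mono_on {0..1} \<phi>"
    and cont: "continuous_on {0..1} \<phi>"
    and range: "\<phi> ` {0..1} \<subseteq> {0..1}"
    and above: "\<forall>x\<in>{0<..<1}. \<phi> x > x"
    and pos0: "\<phi> 0 > 0"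
    and eps: "0 < \<epsilon>" "\<epsilon> < 1" "\<phi> (1 - \<epsilon>) = 1"
    and N1: "\<forall>x\<in>{0..1}. (\<phi> ^^ N) x = 1"
    and N2: "\<exists>x0\<in>{0..<1}. (\<phi> ^^ (N - 1)) x0 \<noteq> 1"
begin

lemma phi_in: "x \<in> {0..1} \<Longrightarrow> \<phi> x \<in> {0..1}" using range by blast

lemma phi_mono: "x \<in> {0..1} \<Longrightarrow> y \<in> {0..1} \<Longrightarrow> x \<le> y \<Longrightarrow> \<phi> x \<le> \<phi> y"
  using mono unfolding mono_on_def by auto

lemma phi1: "\<phi> 1 = 1"
proof -
  have "\<phi> (1-\<epsilon>) \<le> \<phi> 1" using eps by (intro phi_mono) auto
  moreover have "\<phi> 1 \<le> 1" using phi_in[of 1] by auto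
  ultimately show ?thesis using eps(3) by linarith
qed

lemma phi_ge: "x \<in> {0..1} \<Longrightarrow> x \<le> \<phi> x"
proof -
  assume x: "x \<in> {0..1}"
  show ?thesis
  proof (cases "x = 0 \<or> x = 1")
    case True then show ?thesis using pos0 phi1 by auto
  next
    case False then have "x \<in> {0<..<1}" using x by auto
    then show ?thesis using above by fastforce
  qed
qed

lemma pw_in: "x \<in> {0..1} \<Longrightarrow> (\<phi>^^k) x \<in> {0..1}"
  by (induction k) (use phi_in in auto)

lemma pw_mono: "x \<in> {0..1} \<Longrightarrow> y \<in> {0..1} \<Longrightarrow> x \<le> y \<Longrightarrow> (\<phi>^^k) x \<le> (\<phi>^^k) y"
proof (induction k)
  case (Suc k)
  have "\<phi> ((\<phi>^^k) x) \<le> \<phi> ((\<phi>^^k) y)"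
    by (rule phi_mono[OF pw_in pw_in Suc.IH]) (use Suc.prems in auto)
  then show ?case by simp
qed simp

lemma pw_cont: "continuous_on {0..1} (\<phi>^^k)"
proof (induction k)
  case 0 then show ?case by (simp add: continuous_on_id)
next
  case (Suc k)
  have "continuous_on {0..1} (\<phi> \<circ> (\<phi>^^k))"
  proof (rule continuous_on_compose[OF Suc])
    have "(\<phi>^^k) ` {0..1} \<subseteq> {0..1}" using pw_in by blast
    then show "continuous_on ((\<phi>^^k) ` {0..1}) \<phi>" by (rule continuous_on_subset[OF cont])
  qed
  then show ?case by simp
qed

lemma pw_1: "(\<phi>^^k) 1 = 1"
  by (induction k) (auto simp: phi1)

lemma pw_ge: "x \<in> {0..1} \<Longrightarrow> x \<le> (\<phi>^^k) x"
proof (induction k)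
  case (Suc k)
  have "(\<phi>^^k) x \<le> \<phi>((\<phi>^^k) x)" by (rule phi_ge[OF pw_in[OF Suc.prems]])
  then show ?case using Suc by simp
qed simp

lemma pw_add: "(\<phi>^^(j+k)) x = (\<phi>^^j) ((\<phi>^^k) x)"
  by (simp add: funpow_add)

lemma pw_Suc_right: "(\<phi>^^(Suc k)) x = (\<phi>^^k) (\<phi> x)"
  by (simp add: funpow_Suc_right del: funpow.simps)

lemma pw_ge1: "x \<in> {0..1} \<Longrightarrow> (\<phi>^^k) x \<ge> 1 \<Longrightarrow> k \<le> j \<Longrightarrow> (\<phi>^^j) x \<ge> 1"
proof -
  assume x: "x \<in> {0..1}" and k: "(\<phi>^^k) x \<ge> 1" and kj: "k \<le> j"
  have "(\<phi>^^k) x = 1" using k pw_in[OF x, of k] by auto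
  then have "(\<phi>^^j) x = 1" using pw_add[of "j-k" k x] kj pw_1 by simp
  then show ?thesis by simp
qed

lemma N_pos: "N \<ge> 1"
proof (rule ccontr)
  assume "\<not> N \<ge> 1" then have "N = 0" by auto
  with N1[rule_format, of 0] show False by simp
qed

lemma a_lt1: "(\<phi>^^(N-1)) 0 < 1"
proof -
  obtain x0 where x0: "x0 \<in> {0..<1}" "(\<phi>^^(N-1)) x0 \<noteq> 1" using N2 by auto
  have "(\<phi>^^(N-1)) 0 \<le> (\<phi>^^(N-1)) x0" using x0 by (intro pw_mono) auto
  moreover have "(\<phi>^^(N-1)) x0 \<le> 1" using pw_in[of x0 "N-1"] x0 by auto
  ultimately show ?thesis using x0 by auto
qed

lemma pw0_lt1: "j \<le> N - 1 \<Longrightarrow> (\<phi>^^j) 0 < 1"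
proof -
  assume j: "j \<le> N - 1"
  have "(\<phi>^^j) 0 \<le> (\<phi>^^j) ((\<phi>^^(N-1-j)) 0)"
    using pw_in[of 0] pw_ge[of 0] by (intro pw_mono) auto
  also have "\<dots> = (\<phi>^^(j + (N-1-j))) 0" by (rule pw_add[symmetric])
  also have "j + (N-1-j) = N-1" using j by simp
  finally show ?thesis using a_lt1 by auto
qed

lemma pwN: "x \<in> {0..1} \<Longrightarrow> (\<phi>^^N) x = 1" using N1 by auto


end

definition Top :: "(real \<Rightarrow> real) \<Rightarrow> (real \<Rightarrow> 'a::{banach,second_countable_topology}) \<Rightarrow> real \<Rightarrow> 'a" where
  "Top \<phi> f x = (LINT t:{\<phi> x<..1}|lborel. f t)"

definition Int01 :: "(real \<Rightarrow> 'a::{banach,second_countable_topology}) \<Rightarrow> bool" where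
  "Int01 f \<longleftrightarrow> set_integrable lborel {0..1} f"

definition ell :: "(real \<Rightarrow> 'a::{banach,second_countable_topology}) \<Rightarrow> 'a" where
  "ell f = (LINT t:{0..1}|lborel. f t)"

lemma split01:
  fixes f :: "real \<Rightarrow> 'a::{banach,second_countable_topology}"
  assumes f: "Int01 f" and y: "y \<in> {0..1}"
  shows "(LINT t:{0..y}|lborel. f t) + (LINT t:{y<..1}|lborel. f t) = ell f"
proof -
  have "{0..1} = {0..y} \<union> {y<..1}" using y by auto
  moreover have "set_integrable lborel {0..y} f"
    by (rule set_integrable_subset[OF f[unfolded Int01_def]]) (use y in auto)
  moreover have "set_integrable lborel {y<..1} f"
    by (rule set_integrable_subset[OF f[unfolded Int01_def]]) (use y in auto)
  ultimately show ?thesis unfolding ell_def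
    by (metis (no_types, lifting) atLeastAtMost_iff disjoint_iff greaterThanAtMost_iff
        linorder_not_le set_integral_Un)
qed

lemma LINT_HK:
  fixes f :: "real \<Rightarrow> 'a::euclidean_space"
  assumes f: "Int01 f" and y: "y \<in> {0..1}"
  shows "(LINT t:{0..y}|lborel. f t) = integral {0..y} f"
proof -
  have "set_integrable lborel {0..y} f"
    by (rule set_integrable_subset[OF f[unfolded Int01_def]]) (use y in auto)
  then show ?thesis by (rule set_borel_integral_eq_integral(2))
qed

lemma F_cont:
  fixes f :: "real \<Rightarrow> 'a::euclidean_space"
  assumes f: "Int01 f"
  shows "continuous_on {0..1} (\<lambda>y. integral {0..y} f)"
  using f unfolding Int01_def
  by (intro indefinite_integral_continuous_1 set_borel_integral_eq_integral(1))

lemma meas_ind: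
  fixes f :: "real \<Rightarrow> 'a::{banach,second_countable_topology}"
  assumes "Int01 f"
  shows "(\<lambda>x. indicator {0..1} x *\<^sub>R f x) \<in> borel_measurable lborel"
  using assms unfolding Int01_def set_integrable_def by auto

lemma set_int_restrict:
  fixes f :: "real \<Rightarrow> 'a::{banach,second_countable_topology}"
  assumes "A \<subseteq> {0..1}" "A \<in> sets lborel"
  shows "(LINT t:A|lborel. f t) = (LINT t:A|lborel. indicator {0..1} t *\<^sub>R f t)"
  using assms by (intro set_lebesgue_integral_cong) auto

lemma set_int_cong_AE01:
  fixes f g :: "real \<Rightarrow> 'a::{banach,second_countable_topology}"
  assumes f: "Int01 f" and g: "Int01 g" and A: "A \<subseteq> {0..1}" "A \<in> sets lborel"
    and ae: "AE x in lborel. x \<in> {0..1} \<longrightarrow> f x = g x"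
  shows "(LINT t:A|lborel. f t) = (LINT t:A|lborel. g t)"
proof -
  have "(LINT t:A|lborel. indicator {0..1} t *\<^sub>R f t) = (LINT t:A|lborel. indicator {0..1} t *\<^sub>R g t)"
  proof (rule set_lebesgue_integral_cong_AE[OF A(2) meas_ind[OF f] meas_ind[OF g]])
    show "AE x\<in>A in lborel. indicator {0..1} x *\<^sub>R f x = indicator {0..1} x *\<^sub>R g x"
      using ae by eventually_elim (use A in auto)
  qed
  then show ?thesis using set_int_restrict[OF A(1) A(2)] by metis
qed

context vset
begin

lemma Vop_split:
  assumes f: "Int01 f" and x: "x \<in> {0..1}"
  shows "Vop \<phi> f x = ell f - Top \<phi> f x"
  using split01[OF f phi_in[OF x]] unfolding Vop_def Top_def by (simp add: algebra_simps)

lemma Top_HK: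
  fixes f :: "real \<Rightarrow> 'a::euclidean_space"
  assumes f: "Int01 f" and x: "x \<in> {0..1}"
  shows "Top \<phi> f x = ell f - integral {0..\<phi> x} f"
  using split01[OF f phi_in[OF x]] LINT_HK[OF f phi_in[OF x]] unfolding Top_def
  by (simp add: algebra_simps)

lemma Top_cont:
  fixes f :: "real \<Rightarrow> 'a::euclidean_space"
  assumes f: "Int01 f"
  shows "continuous_on {0..1} (Top \<phi> f)"
proof -
  have "continuous_on {0..1} (\<lambda>x. ell f - integral {0..\<phi> x} f)"
  proof (intro continuous_on_diff continuous_on_const)
    have "continuous_on {0..1} ((\<lambda>y. integral {0..y} f) \<circ> \<phi>)"
      by (rule continuous_on_compose[OF cont continuous_on_subset[OF F_cont[OF f]]]) (use phi_in in blast)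
    then show "continuous_on {0..1} (\<lambda>x. integral {0..\<phi> x} f)" by (simp add: o_def)
  qed
  then show ?thesis using Top_HK[OF f] by (metis (no_types, lifting) continuous_on_cong)
qed

lemma Top_Int:
  fixes f :: "real \<Rightarrow> 'a::euclidean_space"
  assumes f: "Int01 f"
  shows "Int01 (Top \<phi> f)"
  unfolding Int01_def by (rule borel_integrable_atLeastAtMost'[OF Top_cont[OF f]])

lemma Vop_cont:
  assumes f: "Int01 f"
  shows "continuous_on {0..1} (Vop \<phi> f)"
proof -
  have "continuous_on {0..1} (\<lambda>x. ell f - Top \<phi> f x)"
    by (intro continuous_on_diff continuous_on_const Top_cont f)
  then show ?thesis using Vop_split[OF f] by (metis (no_types, lifting) continuous_on_cong)
qed

lemma Vop_Int:
  assumes f: "Int01 f"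
  shows "Int01 (Vop \<phi> f)"
  unfolding Int01_def by (rule borel_integrable_atLeastAtMost'[OF Vop_cont[OF f]])

lemma Top_lin:
  fixes f g :: "real \<Rightarrow> complex"
  assumes f: "Int01 f" and g: "Int01 g" and x: "x \<in> {0..1}"
  shows "Top \<phi> (\<lambda>t. a * f t + b * g t) x = a * Top \<phi> f x + b * Top \<phi> g x"
proof -
  have s: "{\<phi> x<..1} \<subseteq> {0..1}" using phi_in[OF x] by auto
  have fi: "set_integrable lborel {\<phi> x<..1} f"
    by (rule set_integrable_subset[OF f[unfolded Int01_def]]) (use s in auto)
  have gi: "set_integrable lborel {\<phi> x<..1} g"
    by (rule set_integrable_subset[OF g[unfolded Int01_def]]) (use s in auto)
  show ?thesis unfolding Top_def
    by (subst set_integral_add(2)) (auto intro!: set_integrable_mult_right fi gi simp: set_integral_mult_right)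
qed

lemma Top_cong:
  fixes f g :: "real \<Rightarrow> 'a::{banach,second_countable_topology}"
  assumes f: "Int01 f" and g: "Int01 g" and x: "x \<in> {0..1}"
    and ae: "AE x in lborel. x \<in> {0..1} \<longrightarrow> f x = g x"
  shows "Top \<phi> f x = Top \<phi> g x"
  unfolding Top_def using phi_in[OF x] by (intro set_int_cong_AE01[OF f g _ _ ae]) auto

lemma Vop_cong:
  assumes f: "Int01 f" and g: "Int01 g" and x: "x \<in> {0..1}"
    and ae: "AE x in lborel. x \<in> {0..1} \<longrightarrow> f x = g x"
  shows "Vop \<phi> f x = Vop \<phi> g x"
  unfolding Vop_def using phi_in[OF x] by (intro set_int_cong_AE01[OF f g _ _ ae]) auto

lemma Top_pow_Int:
  fixes f :: "real \<Rightarrow> 'a::euclidean_space"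
  shows "Int01 f \<Longrightarrow> Int01 ((Top \<phi> ^^ k) f)"
  by (induction k) (auto intro: Top_Int)

lemma Top_nil:
  fixes f :: "real \<Rightarrow> 'a::euclidean_space"
  assumes f: "Int01 f"
  shows "1 \<le> k \<Longrightarrow> x \<in> {0..1} \<Longrightarrow> (\<phi>^^k) x \<ge> 1 \<Longrightarrow> (Top \<phi> ^^ k) f x = 0"
proof (induction k arbitrary: x)
  case 0 then show ?case by simp
next
  case (Suc k)
  show ?case
  proof (cases "k = 0")
    case True
    then have "\<phi> x \<ge> 1" using Suc.prems by simp
    then have "{\<phi> x<..1} = {}" by auto
    then show ?thesis using True by (simp add: Top_def set_lebesgue_integral_def)
  next
    case False
    have "(Top \<phi> ^^ Suc k) f x = (LINT t:{\<phi> x<..1}|lborel. (Top \<phi> ^^ k) f t)"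
      by (simp add: Top_def)
    also have "\<dots> = (LINT t:{\<phi> x<..1}|lborel. 0)"
    proof (rule set_lebesgue_integral_cong)
      show "\<forall>t. t \<in> {\<phi> x<..1} \<longrightarrow> (Top \<phi> ^^ k) f t = 0"
      proof (intro allI impI)
        fix t assume t: "t \<in> {\<phi> x<..1}"
        have px: "\<phi> x \<in> {0..1}" using phi_in Suc.prems by auto
        then have t01: "t \<in> {0..1}" using t by auto
        have "(\<phi>^^k) (\<phi> x) \<le> (\<phi>^^k) t" using t px t01 by (intro pw_mono) auto
        moreover have "(\<phi>^^k) (\<phi> x) = (\<phi>^^Suc k) x" by (rule pw_Suc_right[symmetric])
        ultimately have "(\<phi>^^k) t \<ge> 1" using Suc.prems by auto
        then show "(Top \<phi> ^^ k) f t = 0" using Suc.IH[OF _ t01] False by auto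
      qed
    qed simp
    finally show ?thesis by simp
  qed
qed

lemma Top_nilN:
  fixes f :: "real \<Rightarrow> 'a::euclidean_space"
  assumes f: "Int01 f" and x: "x \<in> {0..1}"
  shows "(Top \<phi> ^^ N) f x = 0"
  using Top_nil[OF f N_pos x] pwN[OF x] by simp

end

definition hr :: "(real \<Rightarrow> real) \<Rightarrow> nat \<Rightarrow> real \<Rightarrow> real" where
  "hr \<phi> k = (Top \<phi> ^^ k) (\<lambda>_. 1)"

lemma Int01_const: "Int01 (\<lambda>_. c::'a::euclidean_space)"
  unfolding Int01_def by (rule borel_integrable_atLeastAtMost') (rule continuous_on_const)

lemma AE_interval:
  fixes u v :: real
  assumes ae: "AE x in lborel. P x" and uv: "u < v"
  shows "\<exists>x\<in>{u<..<v}. P x"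
proof (rule ccontr)
  assume nx: "\<not> (\<exists>x\<in>{u<..<v}. P x)"
  have "AE x in lborel. x \<notin> {u<..<v}" using ae by eventually_elim (use nx in auto)
  moreover have "(AE x in lborel. x \<notin> {u<..<v}) = (emeasure lborel {u<..<v} = 0)"
  proof (rule AE_iff_measurable)
    show "{u<..<v} \<in> sets lborel" unfolding sets_lborel by (rule borel_open) (rule open_greaterThanLessThan)
  qed auto
  ultimately have "emeasure lborel {u<..<v} = 0" by simp
  moreover have "emeasure lborel {u<..<v} = ennreal (v - u)" using uv by simp
  ultimately show False using uv by simp
qed

lemma pos_int:
  fixes g :: "real \<Rightarrow> real"
  assumes g: "Int01 g" and A: "A \<subseteq> {0..1}" "A \<in> sets lborel"
    and nn: "\<And>t. t \<in> A \<Longrightarrow> 0 \<le> g t"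
    and uv: "u < v" "{u<..<v} \<subseteq> A" and ps: "\<And>t. t \<in> {u<..<v} \<Longrightarrow> 0 < g t"
  shows "0 < (LINT t:A|lborel. g t)"
proof -
  have gA: "set_integrable lborel A g" by (rule set_integrable_subset[OF g[unfolded Int01_def] A(2) A(1)])
  have guv: "set_integrable lborel {u<..<v} g"
    by (rule set_integrable_subset[OF gA]) (use uv in auto)
  have "(LINT t:A|lborel. indicator {u<..<v} t * g t) \<le> (LINT t:A|lborel. g t)"
  proof (rule set_integral_mono[OF _ gA])
    show "set_integrable lborel A (\<lambda>t. indicator {u<..<v} t * g t)"
      using guv unfolding set_integrable_def
      by (rule Bochner_Integration.integrable_cong[THEN iffD1, rotated -1]) (use uv in \<open>auto simp: indicator_def\<close>)
    show "\<And>t. t \<in> A \<Longrightarrow> indicator {u<..<v} t * g t \<le> g t" using nn by (auto simp: indicator_def)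
  qed
  moreover have "(LINT t:A|lborel. indicator {u<..<v} t * g t) = (LINT t:{u<..<v}|lborel. g t)"
    unfolding set_lebesgue_integral_def
    by (rule Bochner_Integration.integral_cong) (use uv in \<open>auto simp: indicator_def\<close>)
  moreover have "0 < (LINT t:{u<..<v}|lborel. g t)"
  proof -
    have int: "integrable lborel (\<lambda>t. indicator {u<..<v} t *\<^sub>R g t)" using guv unfolding set_integrable_def .
    have nn': "AE t in lborel. 0 \<le> indicator {u<..<v} t *\<^sub>R g t" using ps by (auto simp: indicator_def less_imp_le)
    have ge: "0 \<le> (LINT t:{u<..<v}|lborel. g t)" unfolding set_lebesgue_integral_def
      using nn' by (rule integral_nonneg_AE)
    have "(LINT t:{u<..<v}|lborel. g t) \<noteq> 0"
    proof
      assume "(LINT t:{u<..<v}|lborel. g t) = 0"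
      then have "AE t in lborel. indicator {u<..<v} t *\<^sub>R g t = 0"
        using integral_nonneg_eq_0_iff_AE[OF int nn'] unfolding set_lebesgue_integral_def by simp
      then obtain t where "t \<in> {u<..<v}" "indicator {u<..<v} t *\<^sub>R g t = 0"
        using AE_interval[OF _ uv(1)] by blast
      then show False using ps[of t] by auto
    qed
    then show ?thesis using ge by linarith
  qed
  ultimately show ?thesis by linarith
qed

context vset
begin

lemma hr0: "hr \<phi> 0 = (\<lambda>_. 1)" by (simp add: hr_def)

lemma hr_Suc: "hr \<phi> (Suc k) = Top \<phi> (hr \<phi> k)" by (simp add: hr_def)

lemma hr_Int: "Int01 (hr \<phi> k)"
  unfolding hr_def by (rule Top_pow_Int[OF Int01_const])

lemma hr_cont: "continuous_on {0..1} (hr \<phi> k)"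
proof (cases k)
  case 0 then show ?thesis by (simp add: hr0 continuous_on_const)
next
  case (Suc j) then show ?thesis using Top_cont[OF hr_Int, of j] by (simp add: hr_Suc)
qed

lemma hr_nn: "x \<in> {0..1} \<Longrightarrow> 0 \<le> hr \<phi> k x"
proof (induction k arbitrary: x)
  case 0 then show ?case by (simp add: hr0)
next
  case (Suc k)
  have s: "{\<phi> x<..1} \<subseteq> {0..1}" using phi_in[OF Suc.prems] by auto
  have "(LINT t:{\<phi> x<..1}|lborel. (0::real)) \<le> (LINT t:{\<phi> x<..1}|lborel. hr \<phi> k t)"
  proof (rule set_integral_mono)
    show "set_integrable lborel {\<phi> x<..1} (hr \<phi> k)"
      by (rule set_integrable_subset[OF hr_Int[unfolded Int01_def]]) (use s in auto)
    show "set_integrable lborel {\<phi> x<..1} (\<lambda>t. 0::real)" by (simp add: set_integrable_def)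
    show "\<And>t. t \<in> {\<phi> x<..1} \<Longrightarrow> 0 \<le> hr \<phi> k t" using Suc.IH s by auto
  qed
  then show ?case by (simp add: hr_Suc Top_def)
qed

lemma hr_zero: "1 \<le> k \<Longrightarrow> x \<in> {0..1} \<Longrightarrow> (\<phi>^^k) x \<ge> 1 \<Longrightarrow> hr \<phi> k x = 0"
  unfolding hr_def by (rule Top_nil[OF Int01_const])

lemma hr_pos: "x \<in> {0..1} \<Longrightarrow> k = 0 \<or> (\<phi>^^k) x < 1 \<Longrightarrow> 0 < hr \<phi> k x"
proof (induction k arbitrary: x)
  case 0 then show ?case by (simp add: hr0)
next
  case (Suc k)
  have x: "x \<in> {0..1}" and lt: "(\<phi>^^Suc k) x < 1" using Suc.prems by auto
  define y where "y = \<phi> x"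
  have y: "y \<in> {0..1}" using phi_in[OF x] y_def by simp
  have pk: "(\<phi>^^k) y < 1" using lt pw_Suc_right[of k x] y_def by simp
  have y1: "y < 1" using pk pw_1[of k] y by (cases "y = 1") auto
  obtain v where v: "y < v" "v \<le> 1" and pv: "\<And>t. t \<in> {y<..<v} \<Longrightarrow> 0 < hr \<phi> k t"
  proof (cases "k = 0")
    case True
    then show ?thesis using that[of 1] y1 by (simp add: hr0)
  next
    case False
    have "\<exists>d>0. \<forall>t\<in>{0..1}. dist t y < d \<longrightarrow> dist ((\<phi>^^k) t) ((\<phi>^^k) y) < 1 - (\<phi>^^k) y"
      using pw_cont[of k] y pk unfolding continuous_on_iff by auto
    then obtain d where d: "d > 0" "\<And>t. t \<in> {0..1} \<Longrightarrow> dist t y < d \<Longrightarrow> dist ((\<phi>^^k) t) ((\<phi>^^k) y) < 1 - (\<phi>^^k) y"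
      by blast
    show ?thesis
    proof (rule that[of "min 1 (y + d)"])
      show "y < min 1 (y + d)" using y1 d by auto
      show "min 1 (y + d) \<le> 1" by simp
      fix t assume t: "t \<in> {y<..<min 1 (y + d)}"
      then have t01: "t \<in> {0..1}" "dist t y < d" using y by (auto simp: dist_real_def)
      then have "(\<phi>^^k) t < 1" using d(2)[OF t01] by (auto simp: dist_real_def)
      then show "0 < hr \<phi> k t" using Suc.IH[OF t01(1)] by auto
    qed
  qed
  have "0 < (LINT t:{y<..1}|lborel. hr \<phi> k t)"
  proof (rule pos_int[OF hr_Int _ _ _ v(1) _ pv])
    show "{y<..1} \<subseteq> {0..1}" using y by auto
    show "{y<..1} \<in> sets lborel" by simp
    show "\<And>t. t \<in> {y<..1} \<Longrightarrow> 0 \<le> hr \<phi> k t" using y by (intro hr_nn) auto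
    show "{y<..<v} \<subseteq> {y<..1}" using v by auto
  qed
  then show ?case by (simp add: hr_Suc Top_def y_def)
qed

lemma ell_hr_last: "0 < ell (hr \<phi> (N - 1))"
proof -
  have h0: "0 < hr \<phi> (N-1) 0" using pw0_lt1[of "N-1"] by (intro hr_pos) auto
  have z: "(0::real) \<in> {0..1}" by simp
  have "\<exists>d>0. \<forall>t\<in>{0..1}. dist t 0 < d \<longrightarrow> dist (hr \<phi> (N-1) t) (hr \<phi> (N-1) 0) < hr \<phi> (N-1) 0"
    using continuous_on_iff[THEN iffD1, OF hr_cont[of "N-1"], rule_format, OF z h0] .
  then obtain d where d: "d > 0" "\<And>t. t \<in> {0..1} \<Longrightarrow> dist t 0 < d \<Longrightarrow> dist (hr \<phi> (N-1) t) (hr \<phi> (N-1) 0) < hr \<phi> (N-1) 0"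
    by blast
  show ?thesis unfolding ell_def
  proof (rule pos_int[OF hr_Int _ _ _ _ _ ])
    show "0 < min 1 d" using d by auto
    show "{0<..<min 1 d} \<subseteq> {0..1}" by auto
    show "\<And>t. t \<in> {0..1} \<Longrightarrow> 0 \<le> hr \<phi> (N - 1) t" by (rule hr_nn)
    fix t assume t: "t \<in> {0<..<min 1 d}"
    then have "t \<in> {0..1}" "dist t 0 < d" by (auto simp: dist_real_def)
    from d(2)[OF this] show "0 < hr \<phi> (N - 1) t" by (auto simp: dist_real_def)
  qed auto
qed

end

definition hc :: "(real \<Rightarrow> real) \<Rightarrow> nat \<Rightarrow> real \<Rightarrow> complex" where
  "hc \<phi> k x = complex_of_real (hr \<phi> k x)"

lemma LINT_sum:
  fixes f :: "nat \<Rightarrow> real \<Rightarrow> 'a::{banach,second_countable_topology}"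
  assumes "finite K" "\<And>k. k \<in> K \<Longrightarrow> set_integrable lborel A (f k)"
  shows "(LINT t:A|lborel. (\<Sum>k\<in>K. f k t)) = (\<Sum>k\<in>K. LINT t:A|lborel. f k t)"
    and "set_integrable lborel A (\<lambda>t. \<Sum>k\<in>K. f k t)"
  using assms
proof (induction K rule: finite_induct)
  case empty
  { case 1 then show ?case by (simp add: set_lebesgue_integral_def) }
  { case 2 then show ?case by (simp add: set_integrable_def) }
next
  case (insert k K)
  { case 1 then show ?case using insert by (simp add: set_integral_add) }
  { case 2 then show ?case using insert by (simp add: set_integral_add) }
qed

context vset
begin

lemma hc_cont: "continuous_on {0..1} (hc \<phi> k)"
  unfolding hc_def by (intro continuous_on_of_real hr_cont)

lemma hc_Int: "Int01 (hc \<phi> k)"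
  unfolding Int01_def by (rule borel_integrable_atLeastAtMost'[OF hc_cont])

lemma hc0: "hc \<phi> 0 x = 1" by (simp add: hc_def hr0)

lemma Top_hc: "Top \<phi> (hc \<phi> k) x = hc \<phi> (Suc k) x"
  unfolding hc_def Top_def hr_Suc by (simp add: set_integral_complex_of_real)

lemma hcN: "x \<in> {0..1} \<Longrightarrow> hc \<phi> N x = 0"
  unfolding hc_def using hr_zero[OF N_pos _ ] pwN by simp

lemma ell_hc: "ell (hc \<phi> k) = complex_of_real (ell (hr \<phi> k))"
  unfolding hc_def ell_def by (simp add: set_integral_complex_of_real)

lemma region:
  assumes j: "j < N"
  shows "\<exists>u v. 0 \<le> u \<and> u < v \<and> v \<le> 1 \<and> (\<forall>x\<in>{u<..<v}. (\<phi>^^j) x < 1 \<and> 1 \<le> (\<phi>^^Suc j) x)"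
proof (cases "j = 0")
  case True
  show ?thesis
  proof (intro exI conjI ballI)
    show "0 \<le> 1 - \<epsilon>" "1 - \<epsilon> < 1" "(1::real) \<le> 1" using eps by auto
    fix x assume x: "x \<in> {1 - \<epsilon><..<1::real}"
    then show "(\<phi>^^j) x < 1" using True by simp
    have "\<phi> (1-\<epsilon>) \<le> \<phi> x" using x eps by (intro phi_mono) auto
    then show "1 \<le> (\<phi>^^Suc j) x" using True eps by simp
  qed
next
  case False
  define S where "S = {0..1} \<inter> (\<phi>^^j) -` {1..}"
  have clS: "closed S" unfolding S_def
    by (rule continuous_closed_preimage[OF pw_cont]) auto
  have eS: "1 - \<epsilon> \<in> S"
  proof -
    have "(\<phi>^^j) (1-\<epsilon>) = (\<phi>^^(j-1)) ((\<phi>^^1) (1-\<epsilon>))" using pw_add[of "j-1" 1] False by simp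
    also have "\<dots> = 1" using eps pw_1 by simp
    finally show ?thesis unfolding S_def using eps by auto
  qed
  have bS: "bdd_below S" unfolding S_def by (rule bdd_belowI[of _ 0]) auto
  define e where "e = Inf S"
  have eInS: "e \<in> S" unfolding e_def using closed_contains_Inf[OF _ bS clS] eS by auto
  have ele: "e \<le> 1 - \<epsilon>" unfolding e_def by (rule cInf_lower[OF eS bS])
  have e01: "e \<in> {0..1}" and pe: "(\<phi>^^j) e \<ge> 1" using eInS unfolding S_def by auto
  have "j \<le> N - 1" using j by simp
  then have "(\<phi>^^j) 0 < 1" by (rule pw0_lt1)
  then have "e \<noteq> 0" using pe by auto
  then have epos: "0 < e" using e01 by auto
  have "e \<in> {0<..<1}" using epos ele eps by auto
  then have pee: "\<phi> e > e" using above by auto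
  have "\<exists>d>0. \<forall>x\<in>{0..1}. dist x e < d \<longrightarrow> dist (\<phi> x) (\<phi> e) < \<phi> e - e"
    using continuous_on_iff[THEN iffD1, OF cont, rule_format, OF e01] pee by auto
  then obtain d where d: "d > 0" "\<And>x. x \<in> {0..1} \<Longrightarrow> dist x e < d \<Longrightarrow> dist (\<phi> x) (\<phi> e) < \<phi> e - e"
    by blast
  show ?thesis
  proof (intro exI conjI ballI)
    show "0 \<le> max 0 (e - d)" by simp
    show "max 0 (e - d) < e" using epos d by auto
    show "e \<le> 1" using e01 by simp
    fix x assume x: "x \<in> {max 0 (e - d)<..<e}"
    then have x01: "x \<in> {0..1}" using e01 by auto
    have "x \<notin> S"
    proof
      assume "x \<in> S" then have "e \<le> x" unfolding e_def by (rule cInf_lower[OF _ bS])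
      then show False using x by auto
    qed
    then show "(\<phi>^^j) x < 1" using x01 unfolding S_def by auto
    have "dist x e < d" using x by (auto simp: dist_real_def)
    then have "\<phi> x > e" using d(2)[OF x01] by (auto simp: dist_real_def)
    then have "(\<phi>^^j) e \<le> (\<phi>^^j) (\<phi> x)" using e01 phi_in[OF x01] by (intro pw_mono) auto
    then show "1 \<le> (\<phi>^^Suc j) x" using pe pw_Suc_right[of j x] by simp
  qed
qed

lemma hc_indep:
  assumes ae: "AE x in lborel. x \<in> {0..1} \<longrightarrow> (\<Sum>k<N. a k * hc \<phi> k x) = 0"
  shows "\<forall>k<N. a k = 0"
proof -
  have "j < N \<longrightarrow> a j = 0" for j
  proof (induction j rule: less_induct)
    case (less j)
    show ?case
    proof
      assume j: "j < N"
      obtain u v where uv: "0 \<le> u" "u < v" "v \<le> 1" and reg: "\<And>x. x\<in>{u<..<v} \<Longrightarrow> (\<phi>^^j) x < 1 \<and> 1 \<le> (\<phi>^^Suc j) x"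
        using region[OF j] by blast
      obtain x where x: "x \<in> {u<..<v}" "x \<in> {0..1} \<longrightarrow> (\<Sum>k<N. a k * hc \<phi> k x) = 0"
        using AE_interval[OF ae uv(2)] by blast
      have x01: "x \<in> {0..1}" using x uv by auto
      have "(\<Sum>k<N. a k * hc \<phi> k x) = a j * hc \<phi> j x + (\<Sum>k\<in>{..<N}-{j}. a k * hc \<phi> k x)"
        using j by (subst sum.remove[of _ j]) auto
      also have "(\<Sum>k\<in>{..<N}-{j}. a k * hc \<phi> k x) = 0"
      proof (rule sum.neutral, rule ballI)
        fix k assume k: "k \<in> {..<N}-{j}"
        show "a k * hc \<phi> k x = 0"
        proof (cases "k < j")
          case True then show ?thesis using less.IH[of k] j by auto
        next
          case False
          then have "Suc j \<le> k" using k by auto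
          then have "1 \<le> (\<phi>^^k) x" using pw_ge1[OF x01, of "Suc j" k] reg[OF x(1)] by auto
          then have "hr \<phi> k x = 0" using \<open>Suc j \<le> k\<close> by (intro hr_zero[OF _ x01]) auto
          then show ?thesis by (simp add: hc_def)
        qed
      qed
      finally have "a j * hc \<phi> j x = 0" using x x01 by simp
      moreover have "0 < hr \<phi> j x" using reg[OF x(1)] by (intro hr_pos[OF x01]) auto
      ultimately show "a j = 0" by (simp add: hc_def)
    qed
  qed
  then show ?thesis by auto
qed

end

definition PhiF :: "(real \<Rightarrow> real) \<Rightarrow> nat \<Rightarrow> (nat \<Rightarrow> complex) \<Rightarrow> real \<Rightarrow> complex" where
  "PhiF \<phi> N c x = (\<Sum>k<N. c k * hc \<phi> k x)"

definition shiftc :: "(nat \<Rightarrow> complex) \<Rightarrow> nat \<Rightarrow> complex" where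
  "shiftc c k = (if k = 0 then 0 else c (k - 1))"

definition cc :: "(real \<Rightarrow> real) \<Rightarrow> nat \<Rightarrow> real" where
  "cc \<phi> k = ell (hr \<phi> k)"

definition Mc :: "(real \<Rightarrow> real) \<Rightarrow> nat \<Rightarrow> complex \<Rightarrow> (nat \<Rightarrow> complex) \<Rightarrow> nat \<Rightarrow> complex" where
  "Mc \<phi> N \<mu> c k = (if k = 0 then (\<Sum>j<N. c j * complex_of_real (cc \<phi> j)) else 0) - shiftc c k - \<mu> * c k"

definition Fop :: "(real \<Rightarrow> real) \<Rightarrow> complex \<Rightarrow> (real \<Rightarrow> complex) \<Rightarrow> real \<Rightarrow> complex" where
  "Fop \<phi> \<mu> = (\<lambda>g x. Vop \<phi> g x - \<mu> * g x)"

definition aeq :: "(real \<Rightarrow> complex) \<Rightarrow> (real \<Rightarrow> complex) \<Rightarrow> bool" where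
  "aeq f g \<longleftrightarrow> (AE x in lborel. x \<in> {0..1} \<longrightarrow> f x = g x)"

lemma aeq_refl: "aeq f f" by (simp add: aeq_def)
lemma aeq_sym: "aeq f g \<Longrightarrow> aeq g f" unfolding aeq_def by (auto elim: eventually_mono)
lemma aeq_trans: "aeq f g \<Longrightarrow> aeq g h \<Longrightarrow> aeq f h"
  unfolding aeq_def by (erule (1) eventually_elim2) auto
lemma aeq_pt: "(\<And>x. x \<in> {0..1} \<Longrightarrow> f x = g x) \<Longrightarrow> aeq f g"
  unfolding aeq_def by auto

lemma Int01_mult: "Int01 f \<Longrightarrow> Int01 (\<lambda>x. (a::complex) * f x)"
  unfolding Int01_def by (rule set_integrable_mult_right)
lemma Int01_add: "Int01 f \<Longrightarrow> Int01 g \<Longrightarrow> Int01 (\<lambda>x. f x + (g x :: complex))"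
  unfolding Int01_def by (rule set_integral_add(1))
lemma Int01_diff: "Int01 f \<Longrightarrow> Int01 g \<Longrightarrow> Int01 (\<lambda>x. f x - (g x :: complex))"
  unfolding Int01_def by (rule set_integral_diff(1))

context vset
begin

lemma Phi_cont: "continuous_on {0..1} (PhiF \<phi> N c)"
  unfolding PhiF_def by (intro continuous_on_sum continuous_on_mult continuous_on_const hc_cont)

lemma Phi_Int: "Int01 (PhiF \<phi> N c)"
  unfolding Int01_def by (rule borel_integrable_atLeastAtMost'[OF Phi_cont])

lemma Phi_L2: "PhiF \<phi> N c \<in> L2_01"
proof -
  have m: "set_borel_measurable lborel {0..1} (PhiF \<phi> N c)"
    using Phi_Int unfolding Int01_def set_integrable_def set_borel_measurable_def by auto
  have "continuous_on {0..1} (\<lambda>x. (cmod (PhiF \<phi> N c x))^2)"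
    by (intro continuous_on_power continuous_on_norm Phi_cont)
  then have "set_integrable lborel {0..1} (\<lambda>x. (cmod (PhiF \<phi> N c x))^2)"
    by (rule borel_integrable_atLeastAtMost')
  then show ?thesis using m unfolding L2_01_def by auto
qed

lemma Phi_lin: "PhiF \<phi> N (\<lambda>k. u k + a * v k) x = PhiF \<phi> N u x + a * PhiF \<phi> N v x"
  unfolding PhiF_def by (simp add: algebra_simps sum.distrib sum_distrib_left)

lemma Phi_zero: "PhiF \<phi> N (\<lambda>_. 0) x = 0"
  unfolding PhiF_def by simp

lemma Phi_e0: "PhiF \<phi> N (\<lambda>k. if k = 0 then s else 0) x = s"
proof -
  have "PhiF \<phi> N (\<lambda>k. if k = 0 then s else 0) x = (\<Sum>k<N. if k = 0 then s * hc \<phi> k x else 0)"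
    unfolding PhiF_def by (intro sum.cong) auto
  also have "\<dots> = s" using N_pos by (simp add: hc0)
  finally show ?thesis .
qed

lemma Top_Phi:
  assumes x: "x \<in> {0..1}"
  shows "Top \<phi> (PhiF \<phi> N c) x = PhiF \<phi> N (shiftc c) x"
proof -
  have s: "{\<phi> x<..1} \<subseteq> {0..1}" using phi_in[OF x] by auto
  have int: "set_integrable lborel {\<phi> x<..1} (\<lambda>t. c k * hc \<phi> k t)" for k
    by (rule set_integrable_subset[OF Int01_mult[OF hc_Int, unfolded Int01_def]]) (use s in auto)
  have "Top \<phi> (PhiF \<phi> N c) x = (\<Sum>k<N. LINT t:{\<phi> x<..1}|lborel. c k * hc \<phi> k t)"
    unfolding Top_def PhiF_def by (rule LINT_sum(1)) (use int in auto)
  also have "\<dots> = (\<Sum>k<N. c k * hc \<phi> (Suc k) x)"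
    using Top_hc[of _ x] unfolding Top_def by (simp add: set_integral_mult_right)
  also have "\<dots> = (\<Sum>k<N. shiftc c (Suc k) * hc \<phi> (Suc k) x)"
    by (simp add: shiftc_def)
  also have "\<dots> = (\<Sum>k<Suc N. shiftc c k * hc \<phi> k x) - shiftc c 0 * hc \<phi> 0 x"
    by (subst sum.lessThan_Suc_shift) simp
  also have "\<dots> = (\<Sum>k<N. shiftc c k * hc \<phi> k x)"
    using hcN[OF x] by (simp add: shiftc_def)
  finally show ?thesis unfolding PhiF_def .
qed

lemma ell_Phi: "ell (PhiF \<phi> N c) = (\<Sum>j<N. c j * complex_of_real (cc \<phi> j))"
proof -
  have int: "set_integrable lborel {0..1} (\<lambda>t. c k * hc \<phi> k t)" for k
    using Int01_mult[OF hc_Int] unfolding Int01_def .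
  have "ell (PhiF \<phi> N c) = (\<Sum>k<N. LINT t:{0..1}|lborel. c k * hc \<phi> k t)"
    unfolding ell_def PhiF_def by (rule LINT_sum(1)) (use int in auto)
  also have "\<dots> = (\<Sum>k<N. c k * ell (hc \<phi> k))"
    unfolding ell_def by (simp add: set_integral_mult_right)
  finally show ?thesis by (simp add: ell_hc cc_def)
qed

lemma Vop_Phi:
  assumes x: "x \<in> {0..1}"
  shows "Fop \<phi> \<mu> (PhiF \<phi> N c) x = PhiF \<phi> N (Mc \<phi> N \<mu> c) x"
proof -
  define s where "s = (\<Sum>j<N. c j * complex_of_real (cc \<phi> j))"
  have "Mc \<phi> N \<mu> c = (\<lambda>k. (\<lambda>k. (if k = 0 then s else 0) + (-1) * shiftc c k) k + (- \<mu>) * c k)"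
    unfolding Mc_def s_def by (auto simp: fun_eq_iff)
  then have "PhiF \<phi> N (Mc \<phi> N \<mu> c) x = s - PhiF \<phi> N (shiftc c) x - \<mu> * PhiF \<phi> N c x"
    by (simp only: Phi_lin Phi_e0) simp
  also have "\<dots> = Vop \<phi> (PhiF \<phi> N c) x - \<mu> * PhiF \<phi> N c x"
    using Vop_split[OF Phi_Int x] Top_Phi[OF x] ell_Phi s_def by simp
  finally show ?thesis by (simp add: Fop_def)
qed

lemma F_Int: "Int01 g \<Longrightarrow> Int01 (Fop \<phi> \<mu> g)"
  unfolding Fop_def by (intro Int01_diff Vop_Int Int01_mult)

lemma Fpow_Int: "Int01 g \<Longrightarrow> Int01 ((Fop \<phi> \<mu> ^^ k) g)"
  by (induction k) (auto intro: F_Int)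

lemma F_cong_ae:
  assumes f: "Int01 f" and g: "Int01 g" and ae: "aeq f g"
  shows "aeq (Fop \<phi> \<mu> f) (Fop \<phi> \<mu> g)"
proof -
  have "\<And>x. x \<in> {0..1} \<Longrightarrow> Vop \<phi> f x = Vop \<phi> g x"
    using Vop_cong[OF f g] ae unfolding aeq_def by blast
  then show ?thesis using ae unfolding aeq_def Fop_def by (auto elim: eventually_mono)
qed

lemma F_cong_pt:
  assumes f: "Int01 f" and g: "Int01 g" and eq: "\<And>x. x \<in> {0..1} \<Longrightarrow> f x = g x"
    and x: "x \<in> {0..1}"
  shows "Fop \<phi> \<mu> f x = Fop \<phi> \<mu> g x"
proof -
  have "Vop \<phi> f x = Vop \<phi> g x" using Vop_cong[OF f g x] eq by auto
  then show ?thesis using eq[OF x] by (simp add: Fop_def)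
qed

lemma Fpow_cong_ae:
  assumes f: "Int01 f" and g: "Int01 g" and ae: "aeq f g"
  shows "aeq ((Fop \<phi> \<mu> ^^ k) f) ((Fop \<phi> \<mu> ^^ k) g)"
proof (induction k)
  case 0 then show ?case using ae by simp
next
  case (Suc k)
  then show ?case using F_cong_ae[OF Fpow_Int[OF f] Fpow_Int[OF g] Suc] by simp
qed

lemma Fpow_Phi:
  "x \<in> {0..1} \<Longrightarrow> (Fop \<phi> \<mu> ^^ k) (PhiF \<phi> N c) x = PhiF \<phi> N ((Mc \<phi> N \<mu> ^^ k) c) x"
proof (induction k arbitrary: x)
  case 0 then show ?case by simp
next
  case (Suc k)
  have "(Fop \<phi> \<mu> ^^ Suc k) (PhiF \<phi> N c) x = Fop \<phi> \<mu> ((Fop \<phi> \<mu> ^^ k) (PhiF \<phi> N c)) x" by simp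
  also have "\<dots> = Fop \<phi> \<mu> (PhiF \<phi> N ((Mc \<phi> N \<mu> ^^ k) c)) x"
    by (rule F_cong_pt[OF Fpow_Int[OF Phi_Int] Phi_Int Suc.IH Suc.prems])
  also have "\<dots> = PhiF \<phi> N ((Mc \<phi> N \<mu> ^^ Suc k) c) x" using Vop_Phi[OF Suc.prems] by simp
  finally show ?case .
qed

end

context vset
begin

lemma Tpow_Phi:
  "x \<in> {0..1} \<Longrightarrow> (Top \<phi> ^^ m) (PhiF \<phi> N c) x = PhiF \<phi> N ((shiftc ^^ m) c) x"
proof (induction m arbitrary: x)
  case 0 then show ?case by simp
next
  case (Suc m)
  have "(Top \<phi> ^^ Suc m) (PhiF \<phi> N c) x = Top \<phi> ((Top \<phi> ^^ m) (PhiF \<phi> N c)) x" by simp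
  also have "\<dots> = Top \<phi> (PhiF \<phi> N ((shiftc ^^ m) c)) x"
    by (rule Top_cong[OF Top_pow_Int[OF Phi_Int] Phi_Int Suc.prems]) (use Suc.IH in auto)
  also have "\<dots> = PhiF \<phi> N ((shiftc ^^ Suc m) c) x" using Top_Phi[OF Suc.prems] by simp
  finally show ?case .
qed

lemma Tpow_cong_pt:
  fixes f g :: "real \<Rightarrow> complex"
  assumes f: "Int01 f" and g: "Int01 g" and ae: "aeq f g" and x: "x \<in> {0..1}" and m: "1 \<le> m"
  shows "(Top \<phi> ^^ m) f x = (Top \<phi> ^^ m) g x"
  using x m
proof (induction m arbitrary: x)
  case 0 then show ?case by simp
next
  case (Suc m)
  show ?case
  proof (cases m)
    case 0 then show ?thesis using Top_cong[OF f g Suc.prems(1) ae[unfolded aeq_def]] by simp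
  next
    case (Suc k)
    then have "(Top \<phi> ^^ m) f y = (Top \<phi> ^^ m) g y" if "y \<in> {0..1}" for y using Suc.IH that by auto
    then show ?thesis
      by (simp only: funpow.simps(2) o_apply)
        (rule Top_cong[OF Top_pow_Int[OF f] Top_pow_Int[OF g] Suc.prems(1)], auto)
  qed
qed

lemma Tpow_cong_ae:
  fixes f g :: "real \<Rightarrow> complex"
  assumes f: "Int01 f" and g: "Int01 g" and ae: "aeq f g"
  shows "aeq ((Top \<phi> ^^ m) f) ((Top \<phi> ^^ m) g)"
proof (cases m)
  case 0 then show ?thesis using ae by simp
next
  case (Suc k)
  show ?thesis
  proof (rule aeq_pt)
    fix x :: real assume x: "x \<in> {0..1}"
    show "(Top \<phi> ^^ m) f x = (Top \<phi> ^^ m) g x" by (rule Tpow_cong_pt[OF f g ae x]) (use Suc in simp)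
  qed
qed

lemma Tpow_lin:
  fixes f1 f2 :: "real \<Rightarrow> complex"
  assumes f1: "Int01 f1" and f2: "Int01 f2"
  shows "x \<in> {0..1} \<Longrightarrow> (Top \<phi> ^^ m) (\<lambda>t. a * f1 t + b * f2 t) x = a * (Top \<phi> ^^ m) f1 x + b * (Top \<phi> ^^ m) f2 x"
proof (induction m arbitrary: x)
  case 0 then show ?case by simp
next
  case (Suc m)
  have "(Top \<phi> ^^ Suc m) (\<lambda>t. a * f1 t + b * f2 t) x
      = Top \<phi> ((Top \<phi> ^^ m) (\<lambda>t. a * f1 t + b * f2 t)) x" by simp
  also have "\<dots> = Top \<phi> (\<lambda>t. a * (Top \<phi> ^^ m) f1 t + b * (Top \<phi> ^^ m) f2 t) x"
  proof (rule Top_cong[OF _ _ Suc.prems])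
    show "Int01 ((Top \<phi> ^^ m) (\<lambda>t. a * f1 t + b * f2 t))"
      by (intro Top_pow_Int Int01_add Int01_mult f1 f2)
    show "Int01 (\<lambda>t. a * (Top \<phi> ^^ m) f1 t + b * (Top \<phi> ^^ m) f2 t)"
      by (intro Top_pow_Int Int01_add Int01_mult f1 f2)
    show "AE x in lborel. x \<in> {0..1} \<longrightarrow> (Top \<phi> ^^ m) (\<lambda>t. a * f1 t + b * f2 t) x = a * (Top \<phi> ^^ m) f1 x + b * (Top \<phi> ^^ m) f2 x"
      using Suc.IH by auto
  qed
  also have "\<dots> = a * (Top \<phi> ^^ Suc m) f1 x + b * (Top \<phi> ^^ Suc m) f2 x"
    using Top_lin[OF Top_pow_Int[OF f1] Top_pow_Int[OF f2] Suc.prems] by simp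
  finally show ?case .
qed

lemma key:
  fixes f :: "real \<Rightarrow> complex"
  assumes f: "Int01 f" and mu: "\<mu> \<noteq> 0" and ae: "aeq (Fop \<phi> \<mu> f) (PhiF \<phi> N w)"
  shows "\<exists>u. aeq f (PhiF \<phi> N u)"
proof -
  define s where "s = ell f"
  define z where "z = (\<lambda>k. (if k = 0 then s else 0) + (-1) * w k)"
  define g where "g = (\<lambda>t. (1/\<mu>) * PhiF \<phi> N z t + (-1/\<mu>) * Top \<phi> f t)"
  have gI: "Int01 g" unfolding g_def by (intro Int01_add Int01_mult Phi_Int Top_Int f)
  have fg: "aeq f g"
    using ae unfolding aeq_def
  proof (eventually_elim, intro impI)
    fix x :: real assume h: "x \<in> {0..1} \<longrightarrow> Fop \<phi> \<mu> f x = PhiF \<phi> N w x" and x: "x \<in> {0..1}"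
    have "Vop \<phi> f x - \<mu> * f x = PhiF \<phi> N w x" using h x by (simp add: Fop_def)
    moreover have "Vop \<phi> f x = s - Top \<phi> f x" using Vop_split[OF f x] s_def by simp
    moreover have "PhiF \<phi> N z x = s - PhiF \<phi> N w x" unfolding z_def Phi_lin Phi_e0 by simp
    ultimately have "\<mu> * f x = PhiF \<phi> N z x - Top \<phi> f x" by (simp add: algebra_simps)
    then show "f x = g x" unfolding g_def using mu by (simp add: field_simps)
  qed
  have claim: "\<exists>u. aeq f (\<lambda>x. PhiF \<phi> N u x + (-1/\<mu>)^m * (Top \<phi> ^^ m) f x)" for m
  proof (induction m)
    case 0
    show ?case by (rule exI[of _ "\<lambda>_. 0"]) (simp add: Phi_zero aeq_refl)
  next
    case (Suc m)
    then obtain u where u: "aeq f (\<lambda>x. PhiF \<phi> N u x + (-1/\<mu>)^m * (Top \<phi> ^^ m) f x)" by blast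
    have A: "aeq ((Top \<phi> ^^ m) f) ((Top \<phi> ^^ m) g)" by (rule Tpow_cong_ae[OF f gI fg])
    have B: "(Top \<phi> ^^ m) g x = (1/\<mu>) * PhiF \<phi> N ((shiftc ^^ m) z) x + (-1/\<mu>) * (Top \<phi> ^^ Suc m) f x"
      if x: "x \<in> {0..1}" for x
    proof -
      have "(Top \<phi> ^^ m) g x = (1/\<mu>) * (Top \<phi> ^^ m) (PhiF \<phi> N z) x + (-1/\<mu>) * (Top \<phi> ^^ m) (Top \<phi> f) x"
        unfolding g_def by (rule Tpow_lin[OF Phi_Int Top_Int[OF f] x])
      also have "(Top \<phi> ^^ m) (Top \<phi> f) = (Top \<phi> ^^ Suc m) f"
        by (simp add: funpow_Suc_right del: funpow.simps)
      finally show ?thesis using Tpow_Phi[OF x] by simp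
    qed
    define u' where "u' = (\<lambda>k. u k + ((-1/\<mu>)^m * (1/\<mu>)) * (shiftc ^^ m) z k)"
    show ?case
    proof (rule exI[of _ u'])
      have "aeq f (\<lambda>x. PhiF \<phi> N u x + (-1/\<mu>)^m * (Top \<phi> ^^ m) g x)"
        using u A unfolding aeq_def by eventually_elim auto
      moreover have "aeq (\<lambda>x. PhiF \<phi> N u x + (-1/\<mu>)^m * (Top \<phi> ^^ m) g x)
          (\<lambda>x. PhiF \<phi> N u' x + (-1/\<mu>)^Suc m * (Top \<phi> ^^ Suc m) f x)"
      proof (rule aeq_pt)
        fix x :: real assume x: "x \<in> {0..1}"
        show "PhiF \<phi> N u x + (-1/\<mu>)^m * (Top \<phi> ^^ m) g x
            = PhiF \<phi> N u' x + (-1/\<mu>)^Suc m * (Top \<phi> ^^ Suc m) f x"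
          unfolding B[OF x] u'_def Phi_lin by (simp add: algebra_simps)
      qed
      ultimately show "aeq f (\<lambda>x. PhiF \<phi> N u' x + (-1/\<mu>)^Suc m * (Top \<phi> ^^ Suc m) f x)"
        by (rule aeq_trans)
    qed
  qed
  obtain u where u: "aeq f (\<lambda>x. PhiF \<phi> N u x + (-1/\<mu>)^N * (Top \<phi> ^^ N) f x)"
    using claim by blast
  have "aeq (\<lambda>x. PhiF \<phi> N u x + (-1/\<mu>)^N * (Top \<phi> ^^ N) f x) (PhiF \<phi> N u)"
    by (rule aeq_pt) (simp add: Top_nilN[OF f])
  then show ?thesis using u aeq_trans by blast
qed

end

lemma L2_Int: "f \<in> L2_01 \<Longrightarrow> Int01 f"
proof -
  assume f: "f \<in> L2_01"
  have m: "set_borel_measurable lborel {0..1} f" and sq: "set_integrable lborel {0..1} (\<lambda>x. (cmod (f x))^2)"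
    using f unfolding L2_01_def by auto
  have b: "set_integrable lborel {0..1} (\<lambda>x. 1 + (cmod (f x))^2)"
    by (rule set_integral_add(1)[OF _ sq]) (rule borel_integrable_atLeastAtMost'[OF continuous_on_const])
  show ?thesis unfolding Int01_def
  proof (rule set_integrable_bound[OF b m])
    have "t \<le> 1 + t^2" for t :: real
    proof -
      have "0 \<le> (t - 1)^2" by simp
      then have "0 \<le> t^2 - 2*t + 1" by (simp add: power2_diff)
      moreover have "0 \<le> t^2" by simp
      ultimately show ?thesis by linarith
    qed
    then show "AE x\<in>{0..1} in lborel. norm (f x) \<le> norm (1 + (cmod (f x))\<^sup>2)" by auto
  qed
qed

context vset
begin

lemma gen_in_W:
  "\<mu> \<noteq> 0 \<Longrightarrow> Int01 f \<Longrightarrow> ae01_zero ((Fop \<phi> \<mu> ^^ k) f) \<Longrightarrow> \<exists>u. aeq f (PhiF \<phi> N u)"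
proof (induction k arbitrary: f)
  case 0
  then have "aeq f (PhiF \<phi> N (\<lambda>_. 0))" by (simp add: ae01_zero_def aeq_def Phi_zero)
  then show ?case by blast
next
  case (Suc k)
  have "(Fop \<phi> \<mu> ^^ Suc k) f = (Fop \<phi> \<mu> ^^ k) (Fop \<phi> \<mu> f)"
    by (simp add: funpow_Suc_right del: funpow.simps)
  then obtain w where "aeq (Fop \<phi> \<mu> f) (PhiF \<phi> N w)"
    using Suc.IH[OF Suc.prems(1) F_Int[OF Suc.prems(2)]] Suc.prems(3) by auto
  then show ?case by (rule key[OF Suc.prems(2) Suc.prems(1)])
qed

lemma gen_coef:
  assumes mu: "\<mu> \<noteq> 0" and f: "Int01 f" and z: "ae01_zero ((Fop \<phi> \<mu> ^^ k) f)"
  shows "\<exists>u. aeq f (PhiF \<phi> N u) \<and> (\<forall>i<N. (Mc \<phi> N \<mu> ^^ k) u i = 0)"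
proof -
  obtain u where u: "aeq f (PhiF \<phi> N u)" using gen_in_W[OF mu f z] by blast
  have "aeq ((Fop \<phi> \<mu> ^^ k) f) ((Fop \<phi> \<mu> ^^ k) (PhiF \<phi> N u))"
    by (rule Fpow_cong_ae[OF f Phi_Int u])
  moreover have "aeq ((Fop \<phi> \<mu> ^^ k) (PhiF \<phi> N u)) (PhiF \<phi> N ((Mc \<phi> N \<mu> ^^ k) u))"
    by (rule aeq_pt) (rule Fpow_Phi)
  ultimately have "aeq ((Fop \<phi> \<mu> ^^ k) f) (PhiF \<phi> N ((Mc \<phi> N \<mu> ^^ k) u))" by (rule aeq_trans)
  then have "AE x in lborel. x \<in> {0..1} \<longrightarrow> (\<Sum>j<N. (Mc \<phi> N \<mu> ^^ k) u j * hc \<phi> j x) = 0"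
    using z unfolding aeq_def ae01_zero_def PhiF_def by eventually_elim auto
  then have "\<forall>i<N. (Mc \<phi> N \<mu> ^^ k) u i = 0" by (rule hc_indep)
  then show ?thesis using u by blast
qed

lemma coef_gen:
  assumes "\<forall>i<N. (Mc \<phi> N \<mu> ^^ k) u i = 0"
  shows "ae01_zero ((Fop \<phi> \<mu> ^^ k) (PhiF \<phi> N u))"
  unfolding ae01_zero_def using Fpow_Phi assms by (auto simp: PhiF_def)

lemma Phi_nonzero:
  assumes "ae01_zero (PhiF \<phi> N u)" shows "\<forall>i<N. u i = 0"
  using assms unfolding ae01_zero_def PhiF_def by (rule hc_indep)

lemma zero_eigen: "0 \<in> point_spectrum \<phi>"
proof -
  define a where "a = \<phi> 0"
  have a: "0 < a" "a \<le> 1" using pos0 phi_in[of 0] a_def by auto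
  define r where "r = (\<lambda>t. indicator {0..a/2} t - indicator {a/2<..a} t :: real)"
  define f where "f = (\<lambda>t. complex_of_real (r t))"
  have rm: "r \<in> borel_measurable lborel" unfolding r_def by measurable
  have int_ind: "integrable lborel (indicat_real S)" if "S \<in> {{0..a/2}, {a/2<..a}}" for S
  proof -
    have "emeasure lborel {0..a/2} < \<infinity>" "emeasure lborel {a/2<..a} < \<infinity>" using a by auto
    then show ?thesis using that by (auto intro!: integrable_real_indicator)
  qed
  have r0: "(LINT t:{0..y}|lborel. r t) = 0" if y: "a \<le> y" for y
  proof -
    have "(LINT t:{0..y}|lborel. r t) = (LINT t|lborel. indicator {0..a/2} t - indicator {a/2<..a} t)"
      unfolding set_lebesgue_integral_def r_def
      by (rule Bochner_Integration.integral_cong) (use y a in \<open>auto simp: indicator_def\<close>)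
    also have "\<dots> = (LINT t|lborel. indicator {0..a/2} t) - (LINT t|lborel. indicator {a/2<..a} t)"
      by (rule Bochner_Integration.integral_diff) (use int_ind in auto)
    also have "\<dots> = 0" using a by (simp add: integral_indicator)
    finally show ?thesis .
  qed
  have fL2: "f \<in> L2_01"
  proof -
    have i01: "integrable lborel (indicat_real {0..1::real})" by (auto intro!: integrable_real_indicator)
    have "integrable lborel (\<lambda>x. indicator {0..1} x * r x)"
      by (rule Bochner_Integration.integrable_bound[OF i01]) (use rm in \<open>auto simp: indicator_def r_def\<close>)
    then have "integrable lborel (\<lambda>x. complex_of_real (indicator {0..1} x * r x))"
      by (rule Bochner_Integration.integrable_of_real)
    then have "set_integrable lborel {0..1} f" unfolding set_integrable_def f_def
      by (simp add: scaleR_conv_of_real)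
    then have m: "set_borel_measurable lborel {0..1} f"
      unfolding set_integrable_def set_borel_measurable_def by auto
    have "set_integrable lborel {0..1} (\<lambda>x. (cmod (f x))^2)" unfolding set_integrable_def f_def
      by (rule Bochner_Integration.integrable_bound[OF i01]) (use rm in \<open>auto simp: indicator_def r_def\<close>)
    then show ?thesis using m unfolding L2_01_def by auto
  qed
  have nz: "\<not> ae01_zero f"
  proof
    assume "ae01_zero f"
    then have ae: "AE x in lborel. x \<in> {0..1} \<longrightarrow> f x = 0" unfolding ae01_zero_def .
    obtain x where x: "x \<in> {0<..<a/2}" "x \<in> {0..1} \<longrightarrow> f x = 0"
      using AE_interval[OF ae, of 0 "a/2"] a by auto
    then show False using a by (auto simp: f_def r_def)
  qed
  have "ae01_zero (\<lambda>x. Vop \<phi> f x - 0 * f x)"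
  proof -
    have "Vop \<phi> f x = 0" if x: "x \<in> {0..1}" for x
    proof -
      have "a \<le> \<phi> x" unfolding a_def using x by (intro phi_mono) auto
      then show ?thesis unfolding Vop_def f_def using r0 by (simp add: set_integral_complex_of_real)
    qed
    then show ?thesis unfolding ae01_zero_def by auto
  qed
  then show ?thesis unfolding point_spectrum_def using fL2 nz by blast
qed

end

definition lin_indep_v :: "nat \<Rightarrow> 'a::field vec list \<Rightarrow> bool" where
  "lin_indep_v n vs \<longleftrightarrow> (\<forall>c. (\<forall>j<n. (\<Sum>i<length vs. c i * vs!i $ j) = 0) \<longrightarrow> (\<forall>i<length vs. c i = 0))"

lemma sum_set_nth:
  assumes "distinct vs"
  shows "(\<Sum>x\<in>set vs. g x) = (\<Sum>i<length vs. g (vs!i))"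
proof -
  have "set vs = (!) vs ` {..<length vs}" by (auto simp: in_set_conv_nth)
  moreover have "inj_on ((!) vs) {..<length vs}" using assms by (simp add: inj_on_nth)
  ultimately show ?thesis by (simp add: sum.reindex)
qed

lemma lin_indep_distinct:
  assumes li: "lin_indep_v n vs" and dims: "set vs \<subseteq> carrier_vec n"
  shows "distinct vs"
proof (rule ccontr)
  assume "\<not> distinct vs"
  then obtain i j where ij: "i < length vs" "j < length vs" "i \<noteq> j" "vs!i = vs!j"
    by (auto simp: distinct_conv_nth)
  define c where "c = (\<lambda>k. if k = i then (1::'a) else if k = j then -1 else 0)"
  have "\<forall>l<n. (\<Sum>k<length vs. c k * vs!k $ l) = 0"
  proof (intro allI impI)
    fix l assume l: "l < n"
    have "(\<Sum>k<length vs. c k * vs!k $ l) = (\<Sum>k<length vs. (if k = i then vs!k $ l else 0) + (if k = j then - (vs!k $ l) else 0))"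
      by (rule sum.cong) (use ij in \<open>auto simp: c_def\<close>)
    also have "\<dots> = vs!i $ l - vs!j $ l" using ij by (simp add: sum.distrib)
    also have "\<dots> = 0" using ij by simp
    finally show "(\<Sum>k<length vs. c k * vs!k $ l) = 0" .
  qed
  then have "c i = 0" using li ij unfolding lin_indep_v_def by blast
  then show False by (simp add: c_def)
qed

lemma lin_indep_le_kernel_dim:
  assumes A: "A \<in> carrier_mat n n" and ker: "set vs \<subseteq> mat_kernel A" and li: "lin_indep_v n vs"
  shows "length vs \<le> kernel_dim A"
proof -
  interpret K: kernel n n A by (unfold_locales, rule A)
  have car: "set vs \<subseteq> carrier_vec n" using ker mat_kernel_carrier[OF A] by auto
  have dist: "distinct vs" by (rule lin_indep_distinct[OF li car])
  obtain B where B: "finite B" "K.basis B" using kernel_basis_exists[OF A] by blast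
  have bb: "K.gen_set B" "B \<subseteq> mat_kernel A" using B(2) unfolding K.Ker.basis_def by simp_all
  have fd: "K.Ker.fin_dim" unfolding K.Ker.fin_dim_def
    by (rule exI[of _ B]) (use B(1) bb in simp)
  have indpt: "\<not> K.lin_dep (set vs)"
  proof
    assume "K.lin_dep (set vs)"
    then obtain S a v where S: "finite S" "S \<subseteq> set vs" "K.lincomb a S = 0\<^sub>v n" "v \<in> S" "a v \<noteq> 0"
      unfolding K.Ker.lin_dep_def by auto
    define a' where "a' = (\<lambda>x. if x \<in> S then a x else 0)"
    have Sk: "S \<subseteq> mat_kernel A" using S(2) ker by auto
    have "\<forall>j<n. (\<Sum>i<length vs. a' (vs!i) * vs!i $ j) = 0"
    proof (intro allI impI)
      fix j assume j: "j < n"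
      have "(\<Sum>i<length vs. a' (vs!i) * vs!i $ j) = (\<Sum>x\<in>set vs. a' x * x $ j)"
        by (rule sum_set_nth[OF dist, symmetric])
      also have "\<dots> = (\<Sum>x\<in>S. a x * x $ j)"
        by (rule sum.mono_neutral_cong_right) (use S in \<open>auto simp: a'_def\<close>)
      also have "\<dots> = K.lincomb a S $ j" by (rule K.lincomb_index[OF j Sk, symmetric])
      also have "\<dots> = 0" using S j by simp
      finally show "(\<Sum>i<length vs. a' (vs!i) * vs!i $ j) = 0" .
    qed
    then have "\<forall>i<length vs. a' (vs!i) = 0" using li unfolding lin_indep_v_def
      by (intro allI impI) (erule allE[of _ "\<lambda>i. a' (vs!i)"], blast)
    moreover obtain i where "i < length vs" "vs!i = v" using S(2,4) by (metis in_set_conv_nth subsetD)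
    ultimately have "a' v = 0" by blast
    then show False using S by (simp add: a'_def)
  qed
  have "card (set vs) \<le> K.dim"
    by (rule K.Ker.li_le_dim(2)[OF fd]) (use ker indpt in auto)
  then show ?thesis using distinct_card[OF dist] by simp
qed

lemma kernel_dim_lin_indep:
  assumes A: "A \<in> carrier_mat n n"
  shows "\<exists>vs. set vs \<subseteq> mat_kernel A \<and> lin_indep_v n vs \<and> length vs = kernel_dim A"
proof -
  interpret K: kernel n n A by (unfold_locales, rule A)
  obtain B where B: "finite B" "K.basis B" using kernel_basis_exists[OF A] by blast
  have dimB: "K.dim = card B" by (rule K.Ker.dim_basis[OF B])
  obtain vs where vs: "set vs = B" "distinct vs" using finite_distinct_list[OF B(1)] by blast
  have Bk: "B \<subseteq> mat_kernel A" and indpt: "\<not> K.lin_dep B" using B(2) unfolding K.Ker.basis_def by auto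
  have li: "lin_indep_v n vs" unfolding lin_indep_v_def
  proof (intro allI impI)
    fix c i assume c: "\<forall>j<n. (\<Sum>i<length vs. c i * vs!i $ j) = 0" and i: "i < length vs"
    define a where "a = (\<lambda>v. c (inv_into {..<length vs} ((!) vs) v))"
    have inj: "inj_on ((!) vs) {..<length vs}" using vs(2) by (simp add: inj_on_nth)
    have anth: "a (vs!k) = c k" if "k < length vs" for k
      unfolding a_def using inv_into_f_f[OF inj] that by simp
    have lc0: "K.lincomb a B = \<zero>\<^bsub>K.VK\<^esub>"
    proof -
      have "K.lincomb a B \<in> mat_kernel A"
        by (rule K.Ker.lincomb_closed) (use Bk in auto)
      then have carr: "K.lincomb a B \<in> carrier_vec n" using mat_kernel_carrier[OF A] by auto
      show ?thesis
      proof (simp, rule eq_vecI)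
        show "dim_vec (K.lincomb a B) = dim_vec (0\<^sub>v n)" using carr by simp
        fix j assume "j < dim_vec (0\<^sub>v n :: 'a vec)"
        then have j: "j < n" by simp
        have "K.lincomb a B $ j = (\<Sum>x\<in>set vs. a x * x $ j)" using K.lincomb_index[OF j Bk] vs(1) by simp
        also have "\<dots> = (\<Sum>k<length vs. a (vs!k) * vs!k $ j)" by (rule sum_set_nth[OF vs(2)])
        also have "\<dots> = (\<Sum>k<length vs. c k * vs!k $ j)" by (rule sum.cong) (auto simp: anth)
        also have "\<dots> = 0" using c j by simp
        finally show "K.lincomb a B $ j = 0\<^sub>v n $ j" using j by simp
      qed
    qed
    have "a (vs!i) = 0"
    proof (rule ccontr)
      assume "a (vs!i) \<noteq> 0"
      then have "K.lin_dep B" unfolding K.Ker.lin_dep_def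
        using lc0 B(1) vs(1) i by (intro exI[of _ B] exI[of _ a] exI[of _ "vs!i"]) auto
      then show False using indpt by simp
    qed
    then show "c i = 0" using anth[OF i] by simp
  qed
  show ?thesis using li vs Bk dimB distinct_card[OF vs(2)] by (intro exI[of _ vs]) auto
qed

lemma kernel_dim_pos:
  assumes A: "A \<in> carrier_mat n n" and v: "v \<in> carrier_vec n" "v \<noteq> 0\<^sub>v n" "A *\<^sub>v v = 0\<^sub>v n"
  shows "1 \<le> kernel_dim A"
proof -
  have "length [v] \<le> kernel_dim A"
  proof (rule lin_indep_le_kernel_dim[OF A])
    show "set [v] \<subseteq> mat_kernel A" using v A by (auto intro: mat_kernelI)
    obtain j where j: "j < n" "v $ j \<noteq> 0" using v by (metis carrier_vecD eq_vecI index_zero_vec(1,2))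
    show "lin_indep_v n [v]" unfolding lin_indep_v_def using j by auto
  qed
  then show ?thesis by simp
qed

lemma kernel_dim_pos_vec:
  assumes A: "A \<in> carrier_mat n n" and d: "1 \<le> kernel_dim A"
  shows "\<exists>v. v \<in> carrier_vec n \<and> v \<noteq> 0\<^sub>v n \<and> A *\<^sub>v v = 0\<^sub>v n"
proof -
  obtain vs where vs: "set vs \<subseteq> mat_kernel A" "lin_indep_v n vs" "length vs = kernel_dim A"
    using kernel_dim_lin_indep[OF A] by blast
  then have l: "0 < length vs" using d by simp
  have v: "vs!0 \<in> mat_kernel A" using vs(1) l by auto
  have "vs!0 \<noteq> 0\<^sub>v n"
  proof
    assume z: "vs!0 = 0\<^sub>v n"
    define c where "c = (\<lambda>i::nat. if i = 0 then (1::'a) else 0)"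
    have "\<forall>j<n. (\<Sum>i<length vs. c i * vs!i $ j) = 0"
    proof (intro allI impI)
      fix j assume j: "j < n"
      have "(\<Sum>i<length vs. c i * vs!i $ j) = (\<Sum>i<length vs. if i = 0 then vs!0 $ j else 0)"
        by (rule sum.cong) (auto simp: c_def)
      also have "\<dots> = 0" using l z j by simp
      finally show "(\<Sum>i<length vs. c i * vs!i $ j) = 0" .
    qed
    then have "c 0 = 0" using vs(2) l unfolding lin_indep_v_def by blast
    then show False by (simp add: c_def)
  qed
  then show ?thesis using mat_kernelD[OF A v] by blast
qed


definition mtrace :: "'a::comm_ring_1 mat \<Rightarrow> 'a" where
  "mtrace A = (\<Sum>i<dim_row A. A $$ (i,i))"

lemma mtrace_mult_comm:
  assumes A: "A \<in> carrier_mat n m" and B: "B \<in> carrier_mat m n"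
  shows "mtrace (A * B) = mtrace (B * A)"
proof -
  have "mtrace (A * B) = (\<Sum>i<n. \<Sum>k<m. A $$ (i,k) * B $$ (k,i))"
    unfolding mtrace_def using A B
    by (auto simp: scalar_prod_def atLeast0LessThan intro!: sum.cong)
  also have "\<dots> = (\<Sum>k<m. \<Sum>i<n. B $$ (k,i) * A $$ (i,k))"
    by (subst sum.swap) (simp add: mult.commute)
  also have "\<dots> = mtrace (B * A)"
    unfolding mtrace_def using A B
    by (auto simp: scalar_prod_def atLeast0LessThan intro!: sum.cong)
  finally show ?thesis .
qed

lemma mtrace_similar:
  assumes "similar_mat A B"
  shows "mtrace A = mtrace B"
proof -
  obtain n P Q where s: "{A,B,P,Q} \<subseteq> carrier_mat n n" "P * Q = 1\<^sub>m n" "Q * P = 1\<^sub>m n" "A = P * B * Q"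
    using similar_matD[OF assms] by blast
  have A: "A \<in> carrier_mat n n" and B: "B \<in> carrier_mat n n" and P: "P \<in> carrier_mat n n"
    and Q: "Q \<in> carrier_mat n n" using s(1) by auto
  have "mtrace A = mtrace ((P * B) * Q)" using s by simp
  also have "\<dots> = mtrace (Q * (P * B))" by (rule mtrace_mult_comm[of _ n n]) (use P B Q in auto)
  also have "Q * (P * B) = (Q * P) * B" using P B Q by (simp add: assoc_mult_mat)
  also have "\<dots> = B" using s(3) B by simp
  finally show ?thesis .
qed

lemma coeff_linear_prod:
  fixes L :: "'a::comm_ring_1 list"
  shows "coeff (\<Prod>a\<leftarrow>L. [:-a, 1:]) (length L) = 1 \<and> (\<forall>k>length L. coeff (\<Prod>a\<leftarrow>L. [:-a, 1:]) k = 0)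
    \<and> (L \<noteq> [] \<longrightarrow> coeff (\<Prod>a\<leftarrow>L. [:-a, 1:]) (length L - 1) = - sum_list L)"
proof (induction L)
  case Nil then show ?case by auto
next
  case (Cons a L)
  define p where "p = (\<Prod>a\<leftarrow>L. [:-a, 1:])"
  have eq: "(\<Prod>a\<leftarrow>a#L. [:-a, 1:]) = Polynomial.smult (-a) p + pCons 0 p" by (simp add: p_def mult_pCons_left)
  have c: "coeff (\<Prod>a\<leftarrow>a#L. [:-a, 1:]) k = -a * coeff p k + (if k = 0 then 0 else coeff p (k - 1))" for k
    unfolding eq by (cases k) auto
  have IH1: "coeff p (length L) = 1" and IH2: "\<And>k. k > length L \<Longrightarrow> coeff p k = 0"
    and IH3: "L \<noteq> [] \<Longrightarrow> coeff p (length L - 1) = - sum_list L" using Cons.IH unfolding p_def by auto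
  show ?case
  proof (intro conjI allI impI)
    show "coeff (\<Prod>a\<leftarrow>a#L. [:-a, 1:]) (length (a#L)) = 1" unfolding c using IH1 IH2 by simp
    fix k assume "k > length (a#L)"
    then show "coeff (\<Prod>a\<leftarrow>a#L. [:-a, 1:]) k = 0" unfolding c using IH2 by simp
  next
    show "coeff (\<Prod>a\<leftarrow>a#L. [:-a, 1:]) (length (a#L) - 1) = - sum_list (a#L)"
    proof (cases L)
      case Nil then show ?thesis unfolding c p_def by simp
    next
      case (Cons b L')
      then show ?thesis unfolding c using IH1 IH3 by simp
    qed
  qed
qed

lemma sum_list_eq_of_prod_eq:
  fixes L M :: "'a::comm_ring_1 list"
  assumes eq: "(\<Prod>a\<leftarrow>L. [:-a, 1:]) = (\<Prod>a\<leftarrow>M. [:-a, 1:])" and len: "length L = length M"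
  shows "sum_list L = sum_list M"
proof (cases "L = []")
  case True then show ?thesis using len by simp
next
  case False
  then have "M \<noteq> []" using len by auto
  then show ?thesis using coeff_linear_prod[of L] coeff_linear_prod[of M] eq len False by simp
qed

lemma expand_powers_length: "length (expand_powers n_as) = sum_list (map fst n_as)"
  by (induction n_as rule: expand_powers.induct) auto

lemma expand_powers_count:
  "length (filter ((=) \<mu>) (expand_powers n_as)) = sum_list (map fst [(n, e)\<leftarrow>n_as . e = \<mu>])"
  by (induction n_as rule: expand_powers.induct) auto

lemma expand_powers_set: "a \<in> set (expand_powers n_as) \<longleftrightarrow> (\<exists>n. (n, a) \<in> set n_as \<and> 0 < n)"
  by (induction n_as rule: expand_powers.induct) auto

lemma sum_min_le: "sum_list (map (min k) xs) \<le> sum_list (xs::nat list)"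
  by (induction xs) auto

lemma sum_min_big: "(\<forall>n\<in>set xs. n \<le> k) \<Longrightarrow> sum_list (map (min k) xs) = sum_list (xs::nat list)"
  by (induction xs) auto

lemma sum_min1_pos: "1 \<le> sum_list (map (min 1) xs) \<longleftrightarrow> (\<exists>n\<in>set xs. 0 < (n::nat))"
  by (induction xs) auto

lemma jordan_data:
  fixes A :: "complex mat"
  assumes A: "A \<in> carrier_mat n n"
  shows "\<exists>as. length as = n \<and> sum_list as = mtrace A
    \<and> (\<forall>\<mu> k. kernel_dim (char_matrix A \<mu> ^\<^sub>m k) \<le> length (filter ((=) \<mu>) as))
    \<and> (\<forall>\<mu>. kernel_dim (char_matrix A \<mu> ^\<^sub>m n) = length (filter ((=) \<mu>) as))
    \<and> (\<forall>\<mu>. \<mu> \<in> set as \<longleftrightarrow> 1 \<le> kernel_dim (char_matrix A \<mu> ^\<^sub>m 1))"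
proof -
  obtain cs where cs: "char_poly A = (\<Prod>a\<leftarrow>cs. [:- a, 1:])" using char_poly_factorized[OF A] by blast
  obtain n_as where jnf: "jordan_nf A n_as" using jordan_nf_exists[OF A cs] by blast
  define as where "as = expand_powers n_as"
  define J where "J = jordan_matrix n_as"
  have sim: "similar_mat A J" using jnf unfolding jordan_nf_def J_def by auto
  have n_eq: "sum_list (map fst n_as) = n"
  proof -
    obtain m P Q where s: "{A,J,P,Q} \<subseteq> carrier_mat m m" using similar_matD[OF sim] by blast
    then have "A \<in> carrier_mat m m" "J \<in> carrier_mat m m" by auto
    then have "dim_row A = m" "dim_row J = m" by auto
    moreover have "dim_row A = n" using A by auto
    moreover have "dim_row J = sum_list (map fst n_as)" unfolding J_def by simp
    ultimately show ?thesis by simp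
  qed
  have Jc: "J \<in> carrier_mat n n" unfolding J_def carrier_mat_def using n_eq by simp
  have len: "length as = n" unfolding as_def expand_powers_length n_eq ..
  have dg: "kernel_dim (char_matrix A \<mu> ^\<^sub>m k) = (\<Sum>b\<leftarrow>map fst [(n, e)\<leftarrow>n_as . e = \<mu>]. min k b)" for \<mu> k
    using dim_gen_eigenspace[OF jnf, of \<mu> k] unfolding dim_gen_eigenspace_def .
  have cnt: "length (filter ((=) \<mu>) as) = sum_list (map fst [(n, e)\<leftarrow>n_as . e = \<mu>])" for \<mu>
    unfolding as_def by (rule expand_powers_count)
  have ut: "upper_triangular J" unfolding upper_triangular_def J_def
    using jordan_matrix_upper_triangular by auto
  have cpJ1: "char_poly J = (\<Prod>a\<leftarrow>diag_mat J. [:- a, 1:])"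
    by (rule char_poly_upper_triangular[OF Jc ut])
  have cpJ2: "char_poly J = (\<Prod>a\<leftarrow>as. [:- a, 1:])"
    unfolding J_def jordan_matrix_char_poly as_def expand_powers by (simp add: o_def)
  have "sum_list (diag_mat J) = sum_list as"
    by (rule sum_list_eq_of_prod_eq) (use cpJ1 cpJ2 len Jc in \<open>auto simp: diag_mat_def\<close>)
  moreover have "sum_list (diag_mat J) = mtrace J"
    unfolding diag_mat_def mtrace_def by (simp add: sum_list_sum_nth atLeast0LessThan)
  moreover have "mtrace A = mtrace J" by (rule mtrace_similar[OF sim])
  ultimately have tr: "sum_list as = mtrace A" by simp
  have blk: "b \<le> n" if "b \<in> set (map fst [(n, e)\<leftarrow>n_as . e = \<mu>])" for b \<mu>
  proof -
    have "b \<in> set (map fst n_as)" using that by auto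
    then have "b \<le> sum_list (map fst n_as)" by (rule member_le_sum_list) simp
    then show ?thesis using n_eq by simp
  qed
  show ?thesis
  proof (intro exI[of _ as] conjI allI)
    show "length as = n" by (rule len)
    show "sum_list as = mtrace A" by (rule tr)
    fix \<mu> k show "kernel_dim (char_matrix A \<mu> ^\<^sub>m k) \<le> length (filter ((=) \<mu>) as)"
      unfolding dg cnt by (rule sum_min_le)
  next
    fix \<mu> show "kernel_dim (char_matrix A \<mu> ^\<^sub>m n) = length (filter ((=) \<mu>) as)"
      unfolding dg cnt using blk by (intro sum_min_big) auto
  next
    fix \<mu>
    have "1 \<le> kernel_dim (char_matrix A \<mu> ^\<^sub>m 1) \<longleftrightarrow> (\<exists>b\<in>set (map fst [(n, e)\<leftarrow>n_as . e = \<mu>]). 0 < b)"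
      unfolding dg by (rule sum_min1_pos)
    also have "\<dots> \<longleftrightarrow> \<mu> \<in> set as" unfolding as_def expand_powers_set by force
    finally show "\<mu> \<in> set as \<longleftrightarrow> 1 \<le> kernel_dim (char_matrix A \<mu> ^\<^sub>m 1)" by simp
  qed
qed


definition Mmat :: "(real \<Rightarrow> real) \<Rightarrow> nat \<Rightarrow> complex mat" where
  "Mmat \<phi> N = mat N N (\<lambda>(i,j). (if i = 0 then complex_of_real (cc \<phi> j) else 0) - (if i = Suc j then 1 else 0))"

lemma Mmat_carrier: "Mmat \<phi> N \<in> carrier_mat N N" by (simp add: Mmat_def)

context vset
begin

lemma Mc_cong: "(\<And>i. i < N \<Longrightarrow> c i = d i) \<Longrightarrow> i < N \<Longrightarrow> Mc \<phi> N \<mu> c i = Mc \<phi> N \<mu> d i"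
  unfolding Mc_def shiftc_def by (auto intro!: sum.cong)

lemma Mc_pow_cong: "(\<And>i. i < N \<Longrightarrow> c i = d i) \<Longrightarrow> i < N \<Longrightarrow> (Mc \<phi> N \<mu> ^^ k) c i = (Mc \<phi> N \<mu> ^^ k) d i"
proof (induction k arbitrary: i)
  case 0 then show ?case by simp
next
  case (Suc k)
  have "\<And>j. j < N \<Longrightarrow> (Mc \<phi> N \<mu> ^^ k) c j = (Mc \<phi> N \<mu> ^^ k) d j" using Suc.IH Suc.prems(1) by blast
  then show ?case by (simp only: funpow.simps(2) o_apply) (rule Mc_cong[OF _ Suc.prems(2)])
qed

lemma Mc_zero: "Mc \<phi> N \<mu> (\<lambda>_. 0) = (\<lambda>_. 0)"
  unfolding Mc_def shiftc_def by (auto simp: fun_eq_iff)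

lemma Mc_pow_zero: "(Mc \<phi> N \<mu> ^^ k) (\<lambda>_. 0) = (\<lambda>_. 0)"
  by (induction k) (auto simp: Mc_zero)

lemma Mc_pow_mono:
  assumes z: "\<forall>j<N. (Mc \<phi> N \<mu> ^^ k) u j = 0" and kk: "k \<le> k'"
  shows "\<forall>j<N. (Mc \<phi> N \<mu> ^^ k') u j = 0"
proof (intro allI impI)
  fix j assume j: "j < N"
  have kk': "k' = (k' - k) + k" using kk by simp
  have "(Mc \<phi> N \<mu> ^^ k') u = (Mc \<phi> N \<mu> ^^ (k' - k)) ((Mc \<phi> N \<mu> ^^ k) u)"
    by (subst kk') (simp only: funpow_add o_apply)
  then have "(Mc \<phi> N \<mu> ^^ k') u j = (Mc \<phi> N \<mu> ^^ (k' - k)) (\<lambda>_. 0) j"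
    using Mc_pow_cong[where c="(Mc \<phi> N \<mu> ^^ k) u" and d="\<lambda>_. 0" and i=j and k="k' - k"] z j by simp
  then show "(Mc \<phi> N \<mu> ^^ k') u j = 0" by (simp add: Mc_pow_zero)
qed

lemma Mc_vec:
  assumes v: "v \<in> carrier_vec N" and i: "i < N"
  shows "(char_matrix (Mmat \<phi> N) \<mu> *\<^sub>v v) $ i = Mc \<phi> N \<mu> (($) v) i"
proof -
  have ent: "char_matrix (Mmat \<phi> N) \<mu> $$ (i,j) = (if i = 0 then complex_of_real (cc \<phi> j) else 0)
      - (if i = Suc j then 1 else 0) - (if j = i then \<mu> else 0)" if "j < N" for j
    using i that unfolding char_matrix_def Mmat_def by auto
  have C: "char_matrix (Mmat \<phi> N) \<mu> \<in> carrier_mat N N" by (rule char_matrix_closed[OF Mmat_carrier])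
  have "(char_matrix (Mmat \<phi> N) \<mu> *\<^sub>v v) $ i = row (char_matrix (Mmat \<phi> N) \<mu>) i \<bullet> v"
    using C i by simp
  also have "\<dots> = (\<Sum>j<N. char_matrix (Mmat \<phi> N) \<mu> $$ (i,j) * v $ j)"
    using v i C by (simp add: scalar_prod_def atLeast0LessThan)
  also have "\<dots> = (\<Sum>j<N. ((if i = 0 then complex_of_real (cc \<phi> j) * v $ j else 0)
      - (if i = Suc j then v $ j else 0)) - (if j = i then \<mu> * v $ j else 0))"
    by (rule sum.cong) (auto simp: ent algebra_simps)
  also have "\<dots> = (if i = 0 then (\<Sum>j<N. v $ j * complex_of_real (cc \<phi> j)) else 0)
      - shiftc (($) v) i - \<mu> * v $ i"
  proof -
    have s1: "(\<Sum>j<N. (if i = 0 then complex_of_real (cc \<phi> j) * v $ j else 0))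
        = (if i = 0 then (\<Sum>j<N. v $ j * complex_of_real (cc \<phi> j)) else 0)"
      by (auto simp: mult.commute)
    have s2: "(\<Sum>j<N. (if i = Suc j then v $ j else 0)) = shiftc (($) v) i"
    proof (cases i)
      case 0 then show ?thesis by (simp add: shiftc_def)
    next
      case (Suc i')
      then have "(\<Sum>j<N. (if i = Suc j then v $ j else 0)) = (\<Sum>j<N. (if j = i' then v $ j else 0))"
        by (intro sum.cong) auto
      also have "\<dots> = v $ i'" using i Suc by simp
      finally show ?thesis using Suc by (simp add: shiftc_def)
    qed
    have s3: "(\<Sum>j<N. (if j = i then \<mu> * v $ j else 0)) = \<mu> * v $ i" using i by simp
    show ?thesis using s1 s2 s3 by (simp add: sum_subtractf)
  qed
  also have "\<dots> = Mc \<phi> N \<mu> (($) v) i" unfolding Mc_def by simp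
  finally show ?thesis .
qed

lemma Mc_pow_vec:
  assumes v: "v \<in> carrier_vec N" and i: "i < N"
  shows "((char_matrix (Mmat \<phi> N) \<mu> ^\<^sub>m k) *\<^sub>v v) $ i = (Mc \<phi> N \<mu> ^^ k) (($) v) i"
  using v i
proof (induction k arbitrary: v i)
  case 0
  have "dim_row (char_matrix (Mmat \<phi> N) \<mu>) = N" by (simp add: char_matrix_def Mmat_def)
  then show ?case using 0 by simp
next
  case (Suc k)
  let ?C = "char_matrix (Mmat \<phi> N) \<mu>"
  have C: "?C \<in> carrier_mat N N" by (simp add: Mmat_carrier)
  have Cv: "?C *\<^sub>v v \<in> carrier_vec N" using C Suc.prems(1) by simp
  have "((?C ^\<^sub>m Suc k) *\<^sub>v v) $ i = ((?C ^\<^sub>m k) *\<^sub>v (?C *\<^sub>v v)) $ i"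
    using C Suc.prems(1) by (simp add: assoc_mult_mat_vec[of _ N N _ N])
  also have "\<dots> = (Mc \<phi> N \<mu> ^^ k) (($) (?C *\<^sub>v v)) i" by (rule Suc.IH[OF Cv Suc.prems(2)])
  also have "\<dots> = (Mc \<phi> N \<mu> ^^ k) (Mc \<phi> N \<mu> (($) v)) i"
    by (rule Mc_pow_cong[OF _ Suc.prems(2)]) (rule Mc_vec[OF Suc.prems(1)])
  also have "\<dots> = (Mc \<phi> N \<mu> ^^ Suc k) (($) v) i" by (simp add: funpow_Suc_right del: funpow.simps)
  finally show ?case .
qed

lemma Mc0_inj:
  assumes z: "\<forall>k<N. Mc \<phi> N 0 c k = 0"
  shows "\<forall>k<N. c k = 0"
proof -
  have low: "c k = 0" if k: "k < N - 1" for k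
  proof -
    have "Mc \<phi> N 0 c (Suc k) = 0" using z k by auto
    then show ?thesis unfolding Mc_def shiftc_def by simp
  qed
  have "Mc \<phi> N 0 c 0 = 0" using z N_pos by auto
  then have s: "(\<Sum>j<N. c j * complex_of_real (cc \<phi> j)) = 0" unfolding Mc_def shiftc_def by simp
  have "(\<Sum>j<N. c j * complex_of_real (cc \<phi> j)) = c (N-1) * complex_of_real (cc \<phi> (N-1))"
  proof -
    have "(\<Sum>j<N. c j * complex_of_real (cc \<phi> j)) = (\<Sum>j<Suc (N-1). c j * complex_of_real (cc \<phi> j))"
      using N_pos by simp
    also have "\<dots> = (\<Sum>j<N-1. c j * complex_of_real (cc \<phi> j)) + c (N-1) * complex_of_real (cc \<phi> (N-1))"
      by (rule sum.lessThan_Suc)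
    also have "(\<Sum>j<N-1. c j * complex_of_real (cc \<phi> j)) = 0" using low by simp
    finally show ?thesis by simp
  qed
  moreover have "cc \<phi> (N-1) \<noteq> 0" using ell_hr_last unfolding cc_def by simp
  ultimately have "c (N-1) = 0" using s by simp
  then show ?thesis using low N_pos by (metis One_nat_def Suc_pred less_Suc_eq neq0_conv not_less_zero)
qed

lemma mtrace_M: "mtrace (Mmat \<phi> N) = 1"
proof -
  have "mtrace (Mmat \<phi> N) = (\<Sum>i<N. if i = 0 then complex_of_real (cc \<phi> 0) else 0)"
    unfolding mtrace_def Mmat_def by (intro sum.cong) auto
  also have "\<dots> = complex_of_real (cc \<phi> 0)" using N_pos by simp
  also have "cc \<phi> 0 = 1"
  proof -
    show ?thesis unfolding cc_def ell_def hr0 by (subst set_integral_const) auto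
  qed
  finally show ?thesis by simp
qed

end

context vset
begin

abbreviation "CM \<mu> \<equiv> char_matrix (Mmat \<phi> N) \<mu>"

lemma CM_carrier: "CM \<mu> \<in> carrier_mat N N" by (rule char_matrix_closed[OF Mmat_carrier])

lemma CM_pow_carrier: "CM \<mu> ^\<^sub>m k \<in> carrier_mat N N" by (rule pow_carrier_mat[OF CM_carrier])

lemma vec_coef: "i < N \<Longrightarrow> vec N u $ i = u i" by simp

lemma kernel_of_coef:
  assumes z: "\<forall>i<N. (Mc \<phi> N \<mu> ^^ k) u i = 0"
  shows "vec N u \<in> mat_kernel (CM \<mu> ^\<^sub>m k)"
proof (rule mat_kernelI[OF CM_pow_carrier])
  show "vec N u \<in> carrier_vec N" by simp
  show "CM \<mu> ^\<^sub>m k *\<^sub>v vec N u = 0\<^sub>v N"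
  proof (rule eq_vecI)
    fix i assume "i < dim_vec (0\<^sub>v N :: complex vec)"
    then have i: "i < N" by simp
    have "(CM \<mu> ^\<^sub>m k *\<^sub>v vec N u) $ i = (Mc \<phi> N \<mu> ^^ k) (($) (vec N u)) i"
      by (rule Mc_pow_vec) (use i in auto)
    also have "\<dots> = (Mc \<phi> N \<mu> ^^ k) u i" by (rule Mc_pow_cong[OF _ i]) simp
    finally show "(CM \<mu> ^\<^sub>m k *\<^sub>v vec N u) $ i = 0\<^sub>v N $ i" using z i by simp
  qed (use CM_carrier[of \<mu>] in simp)
qed

lemma coef_of_kernel:
  assumes v: "v \<in> carrier_vec N" "CM \<mu> ^\<^sub>m k *\<^sub>v v = 0\<^sub>v N"
  shows "\<forall>i<N. (Mc \<phi> N \<mu> ^^ k) (($) v) i = 0"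
proof (intro allI impI)
  fix i assume i: "i < N"
  have "(Mc \<phi> N \<mu> ^^ k) (($) v) i = (CM \<mu> ^\<^sub>m k *\<^sub>v v) $ i" by (rule Mc_pow_vec[OF v(1) i, symmetric])
  then show "(Mc \<phi> N \<mu> ^^ k) (($) v) i = 0" using v(2) i by simp
qed

lemma vec_gen:
  assumes v: "v \<in> carrier_vec N" "CM \<mu> ^\<^sub>m k *\<^sub>v v = 0\<^sub>v N"
  shows "PhiF \<phi> N (($) v) \<in> gen_eigenspace \<phi> \<mu>"
proof -
  have "ae01_zero ((Fop \<phi> \<mu> ^^ k) (PhiF \<phi> N (($) v)))"
    by (rule coef_gen[OF coef_of_kernel[OF v]])
  then show ?thesis unfolding gen_eigenspace_def Fop_def[symmetric] using Phi_L2 by blast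
qed

lemma Phi_sum:
  "(\<Sum>i<L. c i * PhiF \<phi> N (g i) x) = PhiF \<phi> N (\<lambda>k. \<Sum>i<L. c i * g i k) x"
  unfolding PhiF_def by (simp add: sum_distrib_left sum_distrib_right mult.assoc) (rule sum.swap)

lemma Phi_vec_zero:
  assumes "v \<in> carrier_vec N" "ae01_zero (PhiF \<phi> N (($) v))"
  shows "v = 0\<^sub>v N"
  using Phi_nonzero[OF assms(2)] assms(1) by (intro eq_vecI) auto

lemma ps_iff:
  assumes mu: "\<mu> \<noteq> 0"
  shows "\<mu> \<in> point_spectrum \<phi> \<longleftrightarrow> 1 \<le> kernel_dim (CM \<mu> ^\<^sub>m 1)"
proof
  assume "\<mu> \<in> point_spectrum \<phi>"
  then obtain f where f: "f \<in> L2_01" "\<not> ae01_zero f" "ae01_zero (\<lambda>x. Vop \<phi> f x - \<mu> * f x)"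
    unfolding point_spectrum_def by blast
  have "ae01_zero ((Fop \<phi> \<mu> ^^ 1) f)" using f(3) by (simp add: Fop_def)
  then obtain u where u: "aeq f (PhiF \<phi> N u)" "\<forall>i<N. (Mc \<phi> N \<mu> ^^ 1) u i = 0"
    using gen_coef[OF mu L2_Int[OF f(1)]] by blast
  have ker: "vec N u \<in> mat_kernel (CM \<mu> ^\<^sub>m 1)" by (rule kernel_of_coef[OF u(2)])
  have "vec N u \<noteq> 0\<^sub>v N"
  proof
    assume z: "vec N u = 0\<^sub>v N"
    have "\<And>x. PhiF \<phi> N u x = 0"
    proof -
      fix x
      have "\<And>k. k < N \<Longrightarrow> u k = 0" using z by (metis index_vec index_zero_vec(1))
      then show "PhiF \<phi> N u x = 0" unfolding PhiF_def by simp
    qed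
    then have "ae01_zero f" using u(1) unfolding aeq_def ae01_zero_def by auto
    then show False using f(2) by simp
  qed
  then show "1 \<le> kernel_dim (CM \<mu> ^\<^sub>m 1)"
    using kernel_dim_pos[OF CM_pow_carrier] mat_kernelD[OF CM_pow_carrier ker] by blast
next
  assume "1 \<le> kernel_dim (CM \<mu> ^\<^sub>m 1)"
  then obtain v where v: "v \<in> carrier_vec N" "v \<noteq> 0\<^sub>v N" "CM \<mu> ^\<^sub>m 1 *\<^sub>v v = 0\<^sub>v N"
    using kernel_dim_pos_vec[OF CM_pow_carrier] by blast
  have z: "ae01_zero ((Fop \<phi> \<mu> ^^ 1) (PhiF \<phi> N (($) v)))"
    by (rule coef_gen[OF coef_of_kernel[OF v(1,3)]])
  have nz: "\<not> ae01_zero (PhiF \<phi> N (($) v))" using Phi_vec_zero[OF v(1)] v(2) by blast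
  show "\<mu> \<in> point_spectrum \<phi>"
    unfolding point_spectrum_def using Phi_L2 nz z by (auto simp: Fop_def)
qed

lemma nonzero_ev:
  assumes "1 \<le> kernel_dim (CM \<mu> ^\<^sub>m 1)" shows "\<mu> \<noteq> 0"
proof
  assume mu: "\<mu> = 0"
  obtain v where v: "v \<in> carrier_vec N" "v \<noteq> 0\<^sub>v N" "CM \<mu> ^\<^sub>m 1 *\<^sub>v v = 0\<^sub>v N"
    using kernel_dim_pos_vec[OF CM_pow_carrier assms] by blast
  have "\<forall>i<N. (Mc \<phi> N 0 ^^ 1) (($) v) i = 0" using coef_of_kernel[OF v(1,3)] mu by simp
  then have "\<forall>i<N. v $ i = 0" using Mc0_inj by simp
  then have "v = 0\<^sub>v N" using v(1) by (intro eq_vecI) auto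
  then show False using v(2) by simp
qed

lemma alg_mult:
  assumes mu: "\<mu> \<noteq> 0"
    and ub: "\<And>k. kernel_dim (CM \<mu> ^\<^sub>m k) \<le> m" and eqN: "kernel_dim (CM \<mu> ^\<^sub>m N) = m"
  shows "has_alg_mult \<phi> \<mu> m"
  unfolding has_alg_mult_def
proof (intro conjI allI impI)
  obtain vs where vs: "set vs \<subseteq> mat_kernel (CM \<mu> ^\<^sub>m N)" "lin_indep_v N vs" "length vs = m"
    using kernel_dim_lin_indep[OF CM_pow_carrier] eqN by blast
  have vsc: "\<And>v. v \<in> set vs \<Longrightarrow> v \<in> carrier_vec N \<and> CM \<mu> ^\<^sub>m N *\<^sub>v v = 0\<^sub>v N"
    using vs(1) mat_kernelD[OF CM_pow_carrier] by blast
  define fs where "fs = map (\<lambda>v. PhiF \<phi> N (($) v)) vs"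
  show "\<exists>fs. length fs = m \<and> set fs \<subseteq> gen_eigenspace \<phi> \<mu> \<and> ae01_lin_indep fs"
  proof (intro exI[of _ fs] conjI)
    show "length fs = m" using vs(3) by (simp add: fs_def)
    show "set fs \<subseteq> gen_eigenspace \<phi> \<mu>" unfolding fs_def using vsc vec_gen by auto
    show "ae01_lin_indep fs" unfolding ae01_lin_indep_def
    proof (intro allI impI)
      fix c i assume z: "ae01_zero (\<lambda>x. \<Sum>i<length fs. c i * (fs ! i) x)" and i: "i < length fs"
      have "(\<lambda>x. \<Sum>i<length fs. c i * (fs ! i) x) = PhiF \<phi> N (\<lambda>k. \<Sum>i<length vs. c i * vs!i $ k)"
        unfolding fs_def by (simp add: Phi_sum)
      then have "ae01_zero (PhiF \<phi> N (\<lambda>k. \<Sum>i<length vs. c i * vs!i $ k))" using z by simp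
      then have "\<forall>k<N. (\<Sum>i<length vs. c i * vs!i $ k) = 0" by (rule Phi_nonzero)
      moreover have "(\<forall>j<N. (\<Sum>i<length vs. c i * vs!i $ j) = 0) \<longrightarrow> (\<forall>i<length vs. c i = 0)"
        using vs(2)[unfolded lin_indep_v_def] by (rule spec)
      ultimately show "c i = 0" using i by (simp add: fs_def)
    qed
  qed
next
  fix fs assume fs: "set fs \<subseteq> gen_eigenspace \<phi> \<mu> \<and> ae01_lin_indep fs"
  define L where "L = length fs"
  have ex: "\<forall>i<L. \<exists>ku. aeq (fs!i) (PhiF \<phi> N (snd ku)) \<and> (\<forall>j<N. (Mc \<phi> N \<mu> ^^ fst ku) (snd ku) j = 0)"
  proof (intro allI impI)
    fix i assume i: "i < L"
    then have fi: "fs!i \<in> gen_eigenspace \<phi> \<mu>" using fs unfolding L_def by auto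
    then obtain k where "fs!i \<in> L2_01" "ae01_zero ((Fop \<phi> \<mu> ^^ k) (fs!i))"
      unfolding gen_eigenspace_def Fop_def[symmetric] by blast
    then obtain u where "aeq (fs!i) (PhiF \<phi> N u)" "\<forall>j<N. (Mc \<phi> N \<mu> ^^ k) u j = 0"
      using gen_coef[OF mu L2_Int] by blast
    then show "\<exists>ku. aeq (fs!i) (PhiF \<phi> N (snd ku)) \<and> (\<forall>j<N. (Mc \<phi> N \<mu> ^^ fst ku) (snd ku) j = 0)"
      by (intro exI[of _ "(k,u)"]) simp
  qed
  have "\<forall>i. \<exists>ku. i < L \<longrightarrow> aeq (fs!i) (PhiF \<phi> N (snd ku)) \<and> (\<forall>j<N. (Mc \<phi> N \<mu> ^^ fst ku) (snd ku) j = 0)"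
    using ex by blast
  from choice[OF this] obtain KU where KU0: "\<forall>i. i < L \<longrightarrow> aeq (fs!i) (PhiF \<phi> N (snd (KU i))) \<and> (\<forall>j<N. (Mc \<phi> N \<mu> ^^ fst (KU i)) (snd (KU i)) j = 0)"
    by blast
  have KU: "\<And>i. i < L \<Longrightarrow> aeq (fs!i) (PhiF \<phi> N (snd (KU i))) \<and> (\<forall>j<N. (Mc \<phi> N \<mu> ^^ fst (KU i)) (snd (KU i)) j = 0)"
    using KU0 by blast
  define K where "K = (\<Sum>i<L. fst (KU i))"
  define U where "U = (\<lambda>i. snd (KU i))"
  have Kz: "\<forall>j<N. (Mc \<phi> N \<mu> ^^ K) (U i) j = 0" if i: "i < L" for i
  proof (rule Mc_pow_mono)
    show "\<forall>j<N. (Mc \<phi> N \<mu> ^^ fst (KU i)) (U i) j = 0" using KU[OF i] U_def by simp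
    show "fst (KU i) \<le> K" unfolding K_def using i by (intro member_le_sum) auto
  qed
  define vs where "vs = map (\<lambda>i. vec N (U i)) [0..<L]"
  have lvs: "length vs = L" by (simp add: vs_def)
  have ker: "set vs \<subseteq> mat_kernel (CM \<mu> ^\<^sub>m K)" unfolding vs_def using Kz kernel_of_coef by auto
  have vsn: "vs ! i = vec N (U i)" if "i < L" for i using that by (simp add: vs_def)
  have li: "lin_indep_v N vs" unfolding lin_indep_v_def
  proof (intro allI impI)
    fix c i assume c: "\<forall>j<N. (\<Sum>i<length vs. c i * vs ! i $ j) = 0" and i: "i < length vs"
    have "\<forall>i\<in>{..<L}. AE x in lborel. x \<in> {0..1} \<longrightarrow> (fs!i) x = PhiF \<phi> N (U i) x"
      using KU unfolding aeq_def U_def by blast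
    then have ae: "AE x in lborel. \<forall>i\<in>{..<L}. x \<in> {0..1} \<longrightarrow> (fs!i) x = PhiF \<phi> N (U i) x"
      by (rule eventually_ball_finite[OF finite_lessThan])
    have coef0: "(\<Sum>i<L. c i * U i k) = 0" if k: "k < N" for k
    proof -
      have "(\<Sum>i<L. c i * U i k) = (\<Sum>i<length vs. c i * vs ! i $ k)"
      proof (rule sum.cong)
        show "{..<L} = {..<length vs}" using lvs by simp
        fix i assume "i \<in> {..<length vs}"
        then have "i < L" using lvs by simp
        then show "c i * U i k = c i * vs ! i $ k" using vsn k by simp
      qed
      also have "\<dots> = 0" using c k by blast
      finally show ?thesis .
    qed
    have "ae01_zero (\<lambda>x. \<Sum>i<length fs. c i * (fs ! i) x)" unfolding ae01_zero_def
      using ae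
    proof (rule eventually_mono)
      fix x assume elim: "\<forall>i\<in>{..<L}. x \<in> {0..1} \<longrightarrow> (fs!i) x = PhiF \<phi> N (U i) x"
      show "x \<in> {0..1} \<longrightarrow> (\<Sum>i<length fs. c i * (fs ! i) x) = 0"
      proof
        assume x: "x \<in> {0..1}"
        have "(\<Sum>i<length fs. c i * (fs ! i) x) = (\<Sum>i<L. c i * PhiF \<phi> N (U i) x)"
        proof (rule sum.cong)
          show "{..<length fs} = {..<L}" by (simp add: L_def)
          fix i assume "i \<in> {..<L}"
          then show "c i * (fs ! i) x = c i * PhiF \<phi> N (U i) x" using elim x by simp
        qed
        also have "\<dots> = PhiF \<phi> N (\<lambda>k. \<Sum>i<L. c i * U i k) x" by (rule Phi_sum)
        also have "\<dots> = 0" unfolding PhiF_def by (rule sum.neutral) (simp add: coef0)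
        finally show "(\<Sum>i<length fs. c i * (fs ! i) x) = 0" .
      qed
    qed
    moreover have "ae01_lin_indep fs" using fs by (rule conjunct2)
    then have "ae01_zero (\<lambda>x. \<Sum>i<length fs. c i * (fs ! i) x) \<longrightarrow> (\<forall>i<length fs. c i = 0)"
      unfolding ae01_lin_indep_def by (rule spec)
    moreover have "i < length fs" using i lvs unfolding L_def by simp
    ultimately show "c i = 0" by blast
  qed
  have "length vs \<le> kernel_dim (CM \<mu> ^\<^sub>m K)" by (rule lin_indep_le_kernel_dim[OF CM_pow_carrier ker li])
  then show "length fs \<le> m" using ub[of K] lvs L_def by simp
qed

end

lemma card_filter_shift:
  assumes "length as = N"
  shows "card {n\<in>{1..N}. as ! (n - 1) = \<mu>} = length (filter ((=) \<mu>) as)"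
proof -
  have "{n\<in>{1..N}. as ! (n - 1) = \<mu>} = Suc ` {i. i < length as \<and> \<mu> = as ! i}"
  proof (intro equalityI subsetI)
      fix n
      assume n: "n \<in> {n\<in>{1..N}. as ! (n - 1) = \<mu>}"
      then have "n = Suc (n - 1)" "n - 1 < length as" "\<mu> = as ! (n - 1)" using assms by auto
      then show "n \<in> Suc ` {i. i < length as \<and> \<mu> = as ! i}" by blast
    next
      fix n
      assume "n \<in> Suc ` {i. i < length as \<and> \<mu> = as ! i}"
      then obtain i where "n = Suc i" "i < length as" "\<mu> = as ! i" by blast
      then show "n \<in> {n\<in>{1..N}. as ! (n - 1) = \<mu>}" using assms by auto
  qed
  then have "card {n\<in>{1..N}. as ! (n - 1) = \<mu>} = card {i. i < length as \<and> \<mu> = as ! i}"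
    by (simp add: card_image)
  also have "\<dots> = length (filter ((=) \<mu>) as)" by (rule length_filter_conv_card[symmetric])
  finally show ?thesis .
qed

lemma sum_shift_list:
  assumes "length as = N"
  shows "(\<Sum>n=1..N. as ! (n - 1)) = sum_list as"
proof -
  have gen: "(\<Sum>n=1..M. f (n - 1)) = (\<Sum>k<M. f k)" for M and f :: "nat \<Rightarrow> 'a"
    by (induction M) (auto simp: sum.cl_ivl_Suc)
  have "(\<Sum>n=1..N. as ! (n - 1)) = (\<Sum>k<N. as ! k)" by (rule gen)
  also have "\<dots> = sum_list as" using assms by (simp add: sum_list_sum_nth atLeast0LessThan)
  finally show ?thesis .
qed

lemma image_shift_list:
  assumes "length as = N"
  shows "(\<lambda>n. as ! (n - 1)) ` {1..N} = set as"
proof (intro equalityI subsetI)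
    fix x
    assume "x \<in> (\<lambda>n. as ! (n - 1)) ` {1..N}"
    then obtain n where "n \<in> {1..N}" "x = as ! (n - 1)" by blast
    then show "x \<in> set as" using assms by auto
  next
    fix x
    assume "x \<in> set as"
    then obtain i where "i < length as" "x = as ! i" by (auto simp: in_set_conv_nth)
    then have "Suc i \<in> {1..N}" "x = as ! (Suc i - 1)" using assms by auto
    then show "x \<in> (\<lambda>n. as ! (n - 1)) ` {1..N}" by blast
qed

theorem theorem4p3:
  fixes \<phi> :: "real \<Rightarrow> real" and \<epsilon> :: real and N :: nat
  assumes mono: "mono_on {0..1} \<phi>"
    and cont: "continuous_on {0..1} \<phi>"
    and range: "\<phi> ` {0..1} \<subseteq> {0..1}"
    and above: "\<forall>x\<in>{0<..<1}. \<phi> x > x"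
    and pos0: "\<phi> 0 > 0"
    and eps: "0 < \<epsilon>" "\<epsilon> < 1" "\<phi> (1 - \<epsilon>) = 1"
    and N1: "\<forall>x\<in>{0..1}. (\<phi> ^^ N) x = 1"
    and N2: "\<exists>x0\<in>{0..<1}. (\<phi> ^^ (N - 1)) x0 \<noteq> 1"
  shows "\<exists>lam :: nat \<Rightarrow> complex.
           (\<forall>n\<in>{1..N}. lam n \<noteq> 0) \<and>
           point_spectrum \<phi> = insert 0 (lam ` {1..N}) \<and>
           (\<forall>\<mu>. \<mu> \<noteq> 0 \<longrightarrow> has_alg_mult \<phi> \<mu> (card {n\<in>{1..N}. lam n = \<mu>})) \<and>
           (\<Sum>n=1..N. lam n) = 1"
proof -
  interpret V: vset \<phi> \<epsilon> N
    by (rule vset.intro) (fact mono cont range above pos0 eps N1 N2)+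
  obtain as where J: "length as = N" "sum_list as = mtrace (Mmat \<phi> N)"
    "\<And>\<mu> k. kernel_dim (V.CM \<mu> ^\<^sub>m k) \<le> length (filter ((=) \<mu>) as)"
    "\<And>\<mu>. kernel_dim (V.CM \<mu> ^\<^sub>m N) = length (filter ((=) \<mu>) as)"
    "\<And>\<mu>. \<mu> \<in> set as \<longleftrightarrow> 1 \<le> kernel_dim (V.CM \<mu> ^\<^sub>m 1)"
    using jordan_data[OF Mmat_carrier[of \<phi> N]] by blast
  define lam where "lam = (\<lambda>n. as ! (n - 1))"
  have img: "lam ` {1..N} = set as" unfolding lam_def by (rule image_shift_list[OF J(1)])
  have nz: "\<mu> \<noteq> 0" if "\<mu> \<in> set as" for \<mu> using J(5) that V.nonzero_ev by blast
  show ?thesis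
  proof (intro exI[of _ lam] conjI allI impI ballI)
    fix n assume "n \<in> {1..N}"
    then have "lam n \<in> set as" using img by blast
    then show "lam n \<noteq> 0" by (rule nz)
  next
    have "\<mu> \<in> point_spectrum \<phi> \<longleftrightarrow> \<mu> \<in> insert 0 (lam ` {1..N})" for \<mu>
    proof (cases "\<mu> = 0")
      case True then show ?thesis using V.zero_eigen by simp
    next
      case False
      then show ?thesis unfolding img using V.ps_iff[OF False] J(5) by simp
    qed
    then show "point_spectrum \<phi> = insert 0 (lam ` {1..N})" by blast
  next
    fix \<mu> :: complex assume mu: "\<mu> \<noteq> 0"
    have c: "card {n\<in>{1..N}. lam n = \<mu>} = length (filter ((=) \<mu>) as)"
      unfolding lam_def by (rule card_filter_shift[OF J(1)])
    show "has_alg_mult \<phi> \<mu> (card {n\<in>{1..N}. lam n = \<mu>})"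
      unfolding c by (rule V.alg_mult[OF mu J(3) J(4)])
  next
    have "(\<Sum>n=1..N. lam n) = sum_list as" unfolding lam_def by (rule sum_shift_list[OF J(1)])
    also have "\<dots> = 1" using J(2) V.mtrace_M by simp
    finally show "(\<Sum>n=1..N. lam n) = 1" .
  qed
qed


end
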